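(* Let $\delta\in(0,1)$. Assume Assumption (B), Assumption (D2), and that the scaling limits $\gamma_1,\gamma_2$ exist. If $\gamma>1$ and $\gamma'<0$, then with probability at least $1-\delta$ over the choice of $\theta^0$, $$\lim_{m\to+\infty}\sup_{t\in[0,\widetilde T_{\mathrm{eff},\bar\beta}]}\frac{\|\theta_w(t)-\theta_w(0)\|_2}{\|\theta_w(0)\|_2}=+\infty\quad\text{and}\quad\lim_{m\to+\infty}\sup_{t\in[0,\widetilde T_{\mathrm{eff},\bar\beta}]}\frac{\|\theta_{w,z}(t)\|_2}{\|\theta_w(t)\|_2}=1.$$
   Context: Setting. Data $\{(x_i,y_i)\}_{i=1}^n\subset\mathbb R^d\times\mathbb R$; width $m$; scales $\nu=\nu(m),\varepsilon=\varepsilon(m)>0$. Parameters $\theta=(\theta_a,\theta_w)$, $\theta_a=(a_k)_{k=1}^m$, $\theta_w=(w_k)_{k=1}^m$, $w_k\in\mathbb R^d$. Network $f_\theta(x)=\sum_{k=1}^m\nu a_k\sigma(\varepsilon w_k^\top x)$, $e_i=f_\theta(x_i)-y_i$. Initialization $\theta^0=\theta(0)$: $a_k(0)\sim\mathcal N(0,1)$, $w_k(0)\sim\mathcal N(0,I_d)$ independent. Dynamics: $\frac{da_k}{dt}=-\frac\varepsilon\nu\frac1n\sum_ie_i\frac{\sigma(\varepsilon w_k^\top x_i)}{\varepsilon}$, $\frac{dw_k}{dt}=-\frac\nu\varepsilon\frac1n\sum_ie_ia_k\sigma'(\varepsilon w_k^\top x_i)x_i$. Scaling limits $\gamma_1=\lim_{m\to\infty}-\frac{\log\nu}{\log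 m}$, $\gamma_2=\lim_{m\to\infty}-\frac{\log\varepsilon}{\log m}$ exist; $\gamma=\gamma_1+\gamma_2$, $\gamma'=\gamma_1-\gamma_2$. $\theta_{w,z}(t)=(\langle w_1(t),\hat z\rangle,\dots,\langle w_m(t),\hat z\rangle)^\top$. Neuron energy $p_k(t)=\max\{|a_k(t)|,\|w_k(t)\|_\infty\}$, $p_{\max}(t)=\max_kp_k(t)$, $\psi(t)=\sup_{0\le s\le t}p_{\max}(s)$. For $\beta>1$, $\tilde\tau=-\gamma'/\beta$ and $\widetilde T_{\mathrm{eff},\beta}=\inf\{t>0: m\nu\varepsilon\psi^3(t)+\varepsilon\psi^2(t)>m^{-\tilde\tau}\}$. $\bar\beta=\max\{-1024\frac{\gamma'}{\gamma-1},-512\gamma'\}$. Assumption (B): $\sigma\in C^2(\mathbb R)$, $\|\sigma'\|_\infty,\|\sigma''\|_\infty\le C_L$ for a universal $C_L>0$, $\sigma(0)=0$, $\sigma'(0)=1$. Assumption (D2): universal $c>0$ with $\|x_i\|_2\ge1/c$, $|y_i|\le c$; $z=\frac1n\sum_iy_ix_i$ satisfies $1/c\le\|z\|_2\le c$; $\hat z=z/\|z\|_2$. *)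

theory Defs
  imports "HOL-Probability.Probability"
begin

definition net_out :: "nat \<Rightarrow> real \<Rightarrow> real \<Rightarrow> (real \<Rightarrow> real) \<Rightarrow> (nat \<Rightarrow> real)
    \<Rightarrow> (nat \<Rightarrow> real^'d) \<Rightarrow> real^'d \<Rightarrow> real" where
  "net_out m nu eps \<sigma> a w xx = (\<Sum>k<m. nu * a k * \<sigma> (eps * (w k \<bullet> xx)))"

definition theta_w_norm :: "nat \<Rightarrow> (nat \<Rightarrow> real^'d) \<Rightarrow> real" where
  "theta_w_norm m w = sqrt (\<Sum>k<m. (norm (w k))^2)"

definition theta_wz_norm :: "nat \<Rightarrow> real^'d \<Rightarrow> (nat \<Rightarrow> real^'d) \<Rightarrow> real" where
  "theta_wz_norm m zh w = sqrt (\<Sum>k<m. (w k \<bullet> zh)^2)"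

definition neuron_energy :: "(nat \<Rightarrow> real) \<Rightarrow> (nat \<Rightarrow> real^'d) \<Rightarrow> nat \<Rightarrow> real" where
  "neuron_energy a w k = max \<bar>a k\<bar> (infnorm (w k))"

definition p_max :: "nat \<Rightarrow> (nat \<Rightarrow> real) \<Rightarrow> (nat \<Rightarrow> real^'d) \<Rightarrow> real" where
  "p_max m a w = Max ((\<lambda>k. neuron_energy a w k) ` {..<m})"

definition psi :: "nat \<Rightarrow> (real \<Rightarrow> nat \<Rightarrow> real) \<Rightarrow> (real \<Rightarrow> nat \<Rightarrow> real^'d) \<Rightarrow> real \<Rightarrow> real" where
  "psi m a w t = Sup ((\<lambda>s. p_max m (a s) (w s)) ` {0..t})"

text \<open>Effective time T_eff,beta (value in extended reals; +infinity if the set is empty),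
  with tau~ = - gamma' / beta.\<close>
definition T_eff :: "nat \<Rightarrow> real \<Rightarrow> real \<Rightarrow> real \<Rightarrow> real \<Rightarrow>
    (real \<Rightarrow> nat \<Rightarrow> real) \<Rightarrow> (real \<Rightarrow> nat \<Rightarrow> real^'d) \<Rightarrow> ereal" where
  "T_eff m nu eps gamma' \<beta> a w =
     (let tau = - gamma' / \<beta> in
      Inf (ereal ` {t. t > 0 \<and>
        real m * nu * eps * (psi m a w t)^3 + eps * (psi m a w t)^2 > real m powr (- tau)}))"

definition beta_bar :: "real \<Rightarrow> real \<Rightarrow> real" where
  "beta_bar gamma gamma' = max (-1024 * gamma' / (gamma - 1)) (-512 * gamma')"

end

theory Submission
  imports Defs
begin

lemma sig_lip:
  fixes f f' :: "real \<Rightarrow> real"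
  assumes d: "\<And>u. (f has_real_derivative f' u) (at u)" and b: "\<And>u. \<bar>f' u\<bar> \<le> C"
  shows "\<bar>f v - f 0\<bar> \<le> C * \<bar>v\<bar>"
proof (cases "v = 0")
  case True then show ?thesis by simp
next
  case False
  show ?thesis
  proof (cases "v > 0")
    case True
    obtain z where "0 < z" "z < v" "f v - f 0 = (v - 0) * f' z"
      using MVT2[OF True, of f f'] d by blast
    then show ?thesis using b[of z] True by (simp add: abs_mult mult.commute mult_left_mono)
  next
    case F: False
    then have "v < 0" using False by simp
    then obtain z where "v < z" "z < 0" "f 0 - f v = (0 - v) * f' z"
      using MVT2[of v 0 f f'] d by blast
    then show ?thesis using b[of z] \<open>v<0\<close> by (simp add: abs_mult mult.commute mult_left_mono abs_minus_commute)
  qed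
qed

lemma vec_mvt:
  fixes f :: "real \<Rightarrow> 'a::real_normed_vector"
  assumes "a \<le> b" and d: "\<And>u. u \<in> {a..b} \<Longrightarrow> (f has_vector_derivative f' u) (at u within {a..b})"
    and B: "\<And>u. u \<in> {a..b} \<Longrightarrow> norm (f' u) \<le> B"
  shows "norm (f b - f a) \<le> B * (b - a)"
proof -
  have "norm (f b - f a) \<le> B * norm (b - a)"
  proof (rule differentiable_bound[of "{a..b}" f "\<lambda>u h. h *\<^sub>R f' u"])
    show "convex {a..b}" by simp
    show "(f has_derivative (\<lambda>h. h *\<^sub>R f' x)) (at x within {a..b})" if "x \<in> {a..b}" for x
      using d[OF that] by (simp add: has_vector_derivative_def)
    show "onorm (\<lambda>h. h *\<^sub>R f' x) \<le> B" if "x \<in> {a..b}" for x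
      using B[OF that] onorm_scaleR_left[of "\<lambda>h. h" "f' x"] by (simp add: onorm_id bounded_linear_ident)
  qed (use assms in auto)
  then show ?thesis using assms by simp
qed

lemma real_mono_deriv:
  fixes g :: "real \<Rightarrow> real"
  assumes "0 \<le> t" and d: "\<And>u. 0 \<le> u \<Longrightarrow> (g has_real_derivative g' u) (at u within {0..})"
    and n: "\<And>u. 0 \<le> u \<Longrightarrow> g' u \<le> 0"
  shows "g t \<le> g 0"
proof -
  have "\<exists>x\<in>{0..t}. g t - g 0 = (\<lambda>h. g' x * h) (t - 0)"
  proof (rule mvt_very_simple[OF assms(1)])
    fix x assume "0 \<le> x" "x \<le> t"
    have "(g has_real_derivative g' x) (at x within {0..t})"
      using d[OF \<open>0\<le>x\<close>] by (rule DERIV_subset) auto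
    then show "(g has_derivative (\<lambda>h. g' x * h)) (at x within {0..t})"
      by (simp add: has_field_derivative_def)
  qed
  then obtain x where "x \<in> {0..t}" "g t - g 0 = g' x * t" by auto
  then show ?thesis using n[of x] assms(1) mult_nonpos_nonneg[of "g' x" t] by auto
qed

lemma vd_inner_const:
  fixes f :: "real \<Rightarrow> 'a::real_inner"
  assumes "(f has_vector_derivative f') F"
  shows "((\<lambda>s. f s \<bullet> c) has_real_derivative (f' \<bullet> c)) F"
proof -
  have "((\<lambda>s. f s \<bullet> c) has_derivative (\<lambda>h. (h *\<^sub>R f') \<bullet> c)) F"
    using assms unfolding has_vector_derivative_def by (intro derivative_eq_intros) auto
  then show ?thesis unfolding has_field_derivative_def
    by (rule has_derivative_eq_rhs) (auto simp: fun_eq_iff)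
qed

lemma vd_inner_self:
  fixes f :: "real \<Rightarrow> 'a::real_inner"
  assumes "(f has_vector_derivative f') (at t within S)"
  shows "((\<lambda>s. f s \<bullet> f s) has_real_derivative (2 * (f t \<bullet> f'))) (at t within S)"
proof -
  have "((\<lambda>s. f s \<bullet> f s) has_derivative (\<lambda>h. f t \<bullet> (h *\<^sub>R f') + (h *\<^sub>R f') \<bullet> f t)) (at t within S)"
    using assms unfolding has_vector_derivative_def by (intro derivative_eq_intros) auto
  then show ?thesis unfolding has_field_derivative_def
    by (rule has_derivative_eq_rhs) (auto simp: fun_eq_iff inner_commute algebra_simps)
qed

locale traj =
  fixes m n :: nat and nu eps CL :: real and \<sigma> \<sigma>' \<sigma>'' :: "real \<Rightarrow> real"
    and x :: "nat \<Rightarrow> real^'d" and y :: "nat \<Rightarrow> real"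
    and a :: "real \<Rightarrow> nat \<Rightarrow> real" and w :: "real \<Rightarrow> nat \<Rightarrow> real^'d"
  assumes sd1: "\<And>u. (\<sigma> has_real_derivative \<sigma>' u) (at u)"
    and sd2: "\<And>u. (\<sigma>' has_real_derivative \<sigma>'' u) (at u)"
    and sb1: "\<And>u. \<bar>\<sigma>' u\<bar> \<le> CL"
    and sb2: "\<And>u. \<bar>\<sigma>'' u\<bar> \<le> CL"
    and s0: "\<sigma> 0 = 0" and s'0: "\<sigma>' 0 = 1"
    and n_pos: "n > 0" and nu_pos: "nu > 0" and eps_pos: "eps > 0"
    and a_ode: "\<And>k t. k < m \<Longrightarrow> 0 \<le> t \<Longrightarrow>
        ((\<lambda>s. a s k) has_real_derivative
          (- (eps / nu) * (1 / real n) *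
             (\<Sum>i<n. (net_out m nu eps \<sigma> (a t) (w t) (x i) - y i)
                     * (\<sigma> (eps * (w t k \<bullet> x i)) / eps))))
        (at t within {0..})"
    and w_ode: "\<And>k t. k < m \<Longrightarrow> 0 \<le> t \<Longrightarrow>
        ((\<lambda>s. w s k) has_vector_derivative
          (- (nu / eps) * (1 / real n)) *\<^sub>R
             (\<Sum>i<n. ((net_out m nu eps \<sigma> (a t) (w t) (x i) - y i)
                     * a t k * \<sigma>' (eps * (w t k \<bullet> x i))) *\<^sub>R x i))
        (at t within {0..})"
begin

definition e where "e t i = net_out m nu eps \<sigma> (a t) (w t) (x i) - y i"
definition Ad where "Ad t k = - (eps / nu) * (1 / real n) * (\<Sum>i<n. e t i * (\<sigma> (eps * (w t k \<bullet> x i)) / eps))"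
definition Wd where "Wd t k = (- (nu / eps) * (1 / real n)) *\<^sub>R (\<Sum>i<n. (e t i * a t k * \<sigma>' (eps * (w t k \<bullet> x i))) *\<^sub>R x i)"
definition Lf where "Lf t = (\<Sum>i<n. (e t i)^2)"

lemma a_d: "k < m \<Longrightarrow> 0 \<le> t \<Longrightarrow> ((\<lambda>s. a s k) has_real_derivative Ad t k) (at t within {0..})"
  using a_ode unfolding Ad_def e_def by blast

lemma w_d: "k < m \<Longrightarrow> 0 \<le> t \<Longrightarrow> ((\<lambda>s. w s k) has_vector_derivative Wd t k) (at t within {0..})"
  using w_ode unfolding Wd_def e_def by blast

lemma e_d: "0 \<le> t \<Longrightarrow> ((\<lambda>s. e s i) has_real_derivative
   (\<Sum>k<m. nu * (Ad t k * \<sigma> (eps * (w t k \<bullet> x i)) + a t k * (\<sigma>' (eps * (w t k \<bullet> x i)) * (eps * (Wd t k \<bullet> x i))))))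
   (at t within {0..})"
  unfolding e_def net_out_def
proof (intro derivative_eq_intros)
  fix k assume k: "k \<in> {..<m}" and t: "0 \<le> t"
  show "((\<lambda>s. a s k) has_real_derivative Ad t k) (at t within {0..})" using a_d k t by auto
  have "((\<lambda>s. w s k \<bullet> x i) has_real_derivative (Wd t k \<bullet> x i)) (at t within {0..})"
    using w_d[of k t] k t by (intro vd_inner_const) auto
  then show "((\<lambda>s. \<sigma> (eps * (w s k \<bullet> x i))) has_real_derivative
        \<sigma>' (eps * (w t k \<bullet> x i)) * (eps * (Wd t k \<bullet> x i))) (at t within {0..})"
    by (intro DERIV_chain2[OF sd1] derivative_eq_intros) auto
qed (auto simp: algebra_simps)

end

context traj begin

lemma sum_e_sig: "(\<Sum>i<n. e t i * \<sigma> (eps * (w t k \<bullet> x i))) = - (nu * real n) * Ad t k"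
proof -
  have "Ad t k = - (1 / (nu * real n)) * (\<Sum>i<n. e t i * \<sigma> (eps * (w t k \<bullet> x i)))"
    unfolding Ad_def using eps_pos nu_pos
    by (simp add: sum_divide_distrib[symmetric] field_simps)
  then show ?thesis using nu_pos n_pos by (simp add: field_simps)
qed

lemma sum_e_sig': "(\<Sum>i<n. (e t i * a t k * \<sigma>' (eps * (w t k \<bullet> x i))) *\<^sub>R x i) = (- (eps * real n / nu)) *\<^sub>R Wd t k"
  unfolding Wd_def using eps_pos nu_pos n_pos by (simp add: field_simps)

lemma L_d: "0 \<le> t \<Longrightarrow> (Lf has_real_derivative
   (- 2 * real n * (\<Sum>k<m. nu^2 * (Ad t k)^2 + eps^2 * (Wd t k \<bullet> Wd t k)))) (at t within {0..})"
proof -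
  assume t: "0 \<le> t"
  let ?e' = "\<lambda>i. (\<Sum>k<m. nu * (Ad t k * \<sigma> (eps * (w t k \<bullet> x i)) + a t k * (\<sigma>' (eps * (w t k \<bullet> x i)) * (eps * (Wd t k \<bullet> x i)))))"
  have "(Lf has_real_derivative (\<Sum>i<n. 2 * e t i * ?e' i)) (at t within {0..})"
    unfolding Lf_def[abs_def]
    by (intro derivative_eq_intros e_d[OF t]) (auto simp: power2_eq_square intro: e_d[OF t])
  moreover have "(\<Sum>i<n. 2 * e t i * ?e' i) = - 2 * real n * (\<Sum>k<m. nu^2 * (Ad t k)^2 + eps^2 * (Wd t k \<bullet> Wd t k))"
  proof -
    have "(\<Sum>i<n. 2 * e t i * ?e' i) = 2 * (\<Sum>k<m. nu * Ad t k * (\<Sum>i<n. e t i * \<sigma> (eps * (w t k \<bullet> x i))))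
        + 2 * (\<Sum>k<m. nu * eps * (Wd t k \<bullet> (\<Sum>i<n. (e t i * a t k * \<sigma>' (eps * (w t k \<bullet> x i))) *\<^sub>R x i)))"
      by (simp add: sum_distrib_left sum_distrib_right inner_sum_right sum.distrib[symmetric]
          algebra_simps sum.swap[of _ "{..<n}" "{..<m}"])
    also have "\<dots> = - 2 * real n * (\<Sum>k<m. nu^2 * (Ad t k)^2 + eps^2 * (Wd t k \<bullet> Wd t k))"
      unfolding sum_e_sig sum_e_sig' using nu_pos
      by (simp add: sum_distrib_left sum.distrib power2_eq_square field_simps sum_negf)
    finally show ?thesis .
  qed
  ultimately show ?thesis by simp
qed

lemma L_mono: "0 \<le> t \<Longrightarrow> Lf t \<le> Lf 0"
  by (rule real_mono_deriv[OF _ L_d])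
     (auto intro!: mult_nonneg_nonneg sum_nonneg simp: mult_nonneg_nonneg)

lemma e_bound: "0 \<le> t \<Longrightarrow> i < n \<Longrightarrow> \<bar>e t i\<bar> \<le> sqrt (Lf 0)"
proof -
  assume t: "0 \<le> t" and i: "i < n"
  have "(e t i)^2 \<le> Lf t" unfolding Lf_def
    using i by (intro member_le_sum) auto
  also have "\<dots> \<le> Lf 0" by (rule L_mono[OF t])
  finally show ?thesis by (metis real_sqrt_abs real_sqrt_le_mono)
qed

end

context traj begin

lemma CL_ge1: "1 \<le> CL" using sb1[of 0] s'0 by simp

lemma sig_bound: "\<bar>\<sigma> u\<bar> \<le> CL * \<bar>u\<bar>"
  using sig_lip[OF sd1 sb1, of u] s0 by simp

lemma sig'_bound: "\<bar>\<sigma>' u - 1\<bar> \<le> CL * \<bar>u\<bar>"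
  using sig_lip[OF sd2 sb2, of u] s'0 by simp

definition "Xs = (\<Sum>i<n. norm (x i))"
definition "EE = sqrt (Lf 0)"
definition "KK = EE * CL * Xs"
definition "rr = nu / eps"

lemma Xs_nonneg: "0 \<le> Xs" unfolding Xs_def by (simp add: sum_nonneg)
lemma EE_nonneg: "0 \<le> EE" unfolding EE_def Lf_def by (simp add: sum_nonneg)
lemma KK_nonneg: "0 \<le> KK" unfolding KK_def using Xs_nonneg EE_nonneg CL_ge1 by simp
lemma rr_pos: "0 < rr" unfolding rr_def using nu_pos eps_pos by simp

lemma avg_le: "(1 / real n) * (\<Sum>i<n. f i * norm (x i)) \<le> C * Xs"
  if "\<And>i. i < n \<Longrightarrow> 0 \<le> f i \<and> f i \<le> C" for f C
proof -
  have "(\<Sum>i<n. f i * norm (x i)) \<le> (\<Sum>i<n. C * norm (x i))"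
    using that by (intro sum_mono mult_right_mono) auto
  also have "\<dots> = C * Xs" unfolding Xs_def by (simp add: sum_distrib_left)
  finally have 1: "(\<Sum>i<n. f i * norm (x i)) \<le> C * Xs" .
  have 0: "0 \<le> (\<Sum>i<n. f i * norm (x i))" using that by (intro sum_nonneg) auto
  have "(1 / real n) * (\<Sum>i<n. f i * norm (x i)) \<le> (\<Sum>i<n. f i * norm (x i))"
    using n_pos 0 by (simp add: divide_le_eq_1 field_simps mult_le_cancel_right1)
  with 1 show ?thesis by linarith
qed

lemma Ad_bound: assumes "0 \<le> t" "k < m" shows "\<bar>Ad t k\<bar> \<le> (1 / rr) * KK * norm (w t k)"
proof -
  have A: "\<bar>\<Sum>i<n. e t i * (\<sigma> (eps * (w t k \<bullet> x i)) / eps)\<bar> \<le> (\<Sum>i<n. \<bar>e t i\<bar> * (CL * norm (w t k)) * norm (x i))"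
  proof -
    have "\<bar>\<Sum>i<n. e t i * (\<sigma> (eps * (w t k \<bullet> x i)) / eps)\<bar> \<le> (\<Sum>i<n. \<bar>e t i * (\<sigma> (eps * (w t k \<bullet> x i)) / eps)\<bar>)"
      by (rule sum_abs)
    also have "\<dots> \<le> (\<Sum>i<n. \<bar>e t i\<bar> * (CL * norm (w t k)) * norm (x i))"
    proof (intro sum_mono)
    fix i assume i: "i \<in> {..<n}"
    have "\<bar>\<sigma> (eps * (w t k \<bullet> x i)) / eps\<bar> \<le> CL * \<bar>w t k \<bullet> x i\<bar>"
      using sig_bound[of "eps * (w t k \<bullet> x i)"] eps_pos by (simp add: abs_mult divide_le_eq mult_ac)
    also have "\<dots> \<le> CL * (norm (w t k) * norm (x i))"
      using CL_ge1 Cauchy_Schwarz_ineq2 by (intro mult_left_mono) auto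
    finally have h: "\<bar>\<sigma> (eps * (w t k \<bullet> x i)) / eps\<bar> \<le> CL * (norm (w t k) * norm (x i))" .
    show "\<bar>e t i * (\<sigma> (eps * (w t k \<bullet> x i)) / eps)\<bar> \<le> \<bar>e t i\<bar> * (CL * norm (w t k)) * norm (x i)"
      using mult_left_mono[OF h abs_ge_zero[of "e t i"]] by (simp add: abs_mult mult_ac)
    qed
    finally show ?thesis .
  qed
  have B: "(1 / real n) * (\<Sum>i<n. (\<bar>e t i\<bar> * (CL * norm (w t k))) * norm (x i)) \<le> (EE * (CL * norm (w t k))) * Xs"
    using e_bound[OF assms(1)] CL_ge1 unfolding EE_def
    by (intro avg_le) (auto intro: mult_right_mono)
  have "\<bar>Ad t k\<bar> = (eps / nu) * ((1 / real n) * \<bar>\<Sum>i<n. e t i * (\<sigma> (eps * (w t k \<bullet> x i)) / eps)\<bar>)"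
    unfolding Ad_def using eps_pos nu_pos by (simp add: abs_mult)
  also have "\<dots> \<le> (eps / nu) * ((1 / real n) * (\<Sum>i<n. (\<bar>e t i\<bar> * (CL * norm (w t k))) * norm (x i)))"
    using A eps_pos nu_pos n_pos by (intro mult_left_mono) auto
  also have "\<dots> \<le> (eps / nu) * ((EE * (CL * norm (w t k))) * Xs)"
    using B eps_pos nu_pos by (intro mult_left_mono) auto
  finally show ?thesis unfolding rr_def KK_def by (simp add: mult_ac)
qed

lemma Wd_bound: assumes "0 \<le> t" "k < m" shows "norm (Wd t k) \<le> rr * KK * \<bar>a t k\<bar>"
proof -
  have "norm (\<Sum>i<n. (e t i * a t k * \<sigma>' (eps * (w t k \<bullet> x i))) *\<^sub>R x i) \<le> (\<Sum>i<n. (\<bar>e t i\<bar> * (\<bar>a t k\<bar> * CL)) * norm (x i))"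
  proof (rule order_trans[OF norm_sum], intro sum_mono)
    fix i assume i: "i \<in> {..<n}"
    show "norm ((e t i * a t k * \<sigma>' (eps * (w t k \<bullet> x i))) *\<^sub>R x i) \<le> (\<bar>e t i\<bar> * (\<bar>a t k\<bar> * CL)) * norm (x i)"
      using mult_left_mono[OF sb1[of "eps * (w t k \<bullet> x i)"], of "\<bar>e t i\<bar> * \<bar>a t k\<bar> * norm (x i)"]
      by (simp add: abs_mult mult_ac)
  qed
  moreover have B: "(1 / real n) * (\<Sum>i<n. (\<bar>e t i\<bar> * (\<bar>a t k\<bar> * CL)) * norm (x i)) \<le> (EE * (\<bar>a t k\<bar> * CL)) * Xs"
    using e_bound[OF assms(1)] CL_ge1 unfolding EE_def
    by (intro avg_le) (auto intro: mult_right_mono)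
  ultimately have "(nu / eps) * ((1 / real n) * norm (\<Sum>i<n. (e t i * a t k * \<sigma>' (eps * (w t k \<bullet> x i))) *\<^sub>R x i))
     \<le> (nu / eps) * ((EE * (\<bar>a t k\<bar> * CL)) * Xs)"
    using eps_pos nu_pos n_pos by (intro mult_left_mono) (auto simp: divide_right_mono intro: order_trans[OF divide_right_mono])
  moreover have "norm (Wd t k) = (nu / eps) * ((1 / real n) * norm (\<Sum>i<n. (e t i * a t k * \<sigma>' (eps * (w t k \<bullet> x i))) *\<^sub>R x i))"
    unfolding Wd_def using eps_pos nu_pos n_pos by (simp add: abs_mult)
  ultimately have "norm (Wd t k) \<le> (nu / eps) * ((EE * (\<bar>a t k\<bar> * CL)) * Xs)" by simp
  then show ?thesis unfolding rr_def KK_def by (simp add: mult_ac)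
qed

definition "V t k = rr^2 * (a t k)^2 + w t k \<bullet> w t k"

lemma V_bound: assumes "0 \<le> t" "k < m" shows "V t k \<le> V 0 k * exp (2 * KK * t)"
proof -
  define g where "g s = V s k * exp (- (2 * KK * s))" for s
  define g' where "g' s = (2 * rr^2 * a s k * Ad s k + 2 * (w s k \<bullet> Wd s k)) * exp (- (2 * KK * s))
     + V s k * (exp (- (2 * KK * s)) * (- (2 * KK)))" for s
  have "g t \<le> g 0"
  proof (rule real_mono_deriv[OF assms(1), of g g'])
    fix u :: real assume u: "0 \<le> u"
    have "((\<lambda>s. V s k) has_real_derivative (2 * rr^2 * a u k * Ad u k + 2 * (w u k \<bullet> Wd u k))) (at u within {0..})"
      unfolding V_def[abs_def]
      by (rule derivative_eq_intros vd_inner_self a_d[OF assms(2) u] w_d[OF assms(2) u] refl)+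
         (auto simp: power2_eq_square)
    then show "(g has_real_derivative g' u) (at u within {0..})"
      unfolding g_def[abs_def] g'_def
      by (auto intro!: derivative_eq_intros)
    have 1: "rr^2 * a u k * Ad u k \<le> rr * KK * \<bar>a u k\<bar> * norm (w u k)"
    proof -
      have "rr^2 * a u k * Ad u k \<le> rr^2 * \<bar>a u k\<bar> * \<bar>Ad u k\<bar>"
        using mult_left_mono[OF abs_ge_self[of "a u k * Ad u k"], of "rr^2"] by (simp add: abs_mult mult_ac)
      also have "\<dots> \<le> rr^2 * \<bar>a u k\<bar> * ((1 / rr) * KK * norm (w u k))"
        by (intro mult_left_mono Ad_bound u assms(2)) auto
      also have "rr^2 * \<bar>a u k\<bar> * ((1 / rr) * KK * norm (w u k)) = rr * KK * \<bar>a u k\<bar> * norm (w u k)"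
        using rr_pos by (simp add: power2_eq_square field_simps)
      finally show ?thesis .
    qed
    have 2: "w u k \<bullet> Wd u k \<le> rr * KK * \<bar>a u k\<bar> * norm (w u k)"
    proof -
      have "w u k \<bullet> Wd u k \<le> norm (w u k) * norm (Wd u k)" by (rule norm_cauchy_schwarz)
      also have "\<dots> \<le> norm (w u k) * (rr * KK * \<bar>a u k\<bar>)"
        by (intro mult_left_mono Wd_bound u assms(2)) auto
      finally show ?thesis by (simp add: mult_ac)
    qed
    have 3: "2 * (rr * \<bar>a u k\<bar> * norm (w u k)) \<le> V u k"
    proof -
      have "0 \<le> (rr * \<bar>a u k\<bar> - norm (w u k))^2" by simp
      then show ?thesis unfolding V_def using rr_pos
        by (simp add: power2_eq_square algebra_simps inner_commute dot_square_norm[symmetric]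
            power_mult_distrib) (simp add: power2_norm_eq_inner[symmetric] power2_eq_square)
    qed
    have "2 * rr^2 * a u k * Ad u k + 2 * (w u k \<bullet> Wd u k) \<le> 2 * KK * V u k"
      using 1 2 mult_left_mono[OF 3 KK_nonneg] by (simp add: algebra_simps)
    then have "(2 * rr^2 * a u k * Ad u k + 2 * (w u k \<bullet> Wd u k)) * exp (- (2 * KK * u)) \<le> (2 * KK * V u k) * exp (- (2 * KK * u))"
      by (intro mult_right_mono) auto
    then show "g' u \<le> 0" unfolding g'_def by (simp add: algebra_simps)
  qed
  then show ?thesis unfolding g_def
    by (simp add: exp_minus field_simps)
qed

end

context traj begin

definition "R k = rr * \<bar>a 0 k\<bar> + norm (w 0 k)"

lemma R_nonneg: "0 \<le> R k" unfolding R_def using rr_pos by simp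

lemma V_nonneg: "0 \<le> V u k" unfolding V_def by simp

lemma sqrtV0: "sqrt (V 0 k) \<le> R k"
proof -
  have "V 0 k \<le> (R k)^2" unfolding V_def R_def using rr_pos
    by (simp add: power2_eq_square algebra_simps abs_mult_self_eq power2_norm_eq_inner[symmetric])
  then show ?thesis using R_nonneg by (intro real_le_lsqrt) auto
qed

lemma sqrtVu: assumes "0 \<le> u" "2 * KK * u \<le> 1" "k < m" shows "sqrt (V u k) \<le> 2 * R k"
proof -
  have "V u k \<le> V 0 k * exp (2 * KK * u)" by (rule V_bound[OF assms(1,3)])
  also have "\<dots> \<le> V 0 k * 4"
  proof (intro mult_left_mono V_nonneg)
    have "exp (2 * KK * u) \<le> exp 1" using assms(2) by simp
    also have "\<dots> \<le> 4" using exp_le by simp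
    finally show "exp (2 * KK * u) \<le> 4" .
  qed
  finally have "sqrt (V u k) \<le> sqrt (V 0 k * 4)" by (rule real_sqrt_le_mono)
  then have "sqrt (V u k) \<le> sqrt (V 0 k) * 2" by (simp add: real_sqrt_mult real_sqrt_four)
  with sqrtV0[of k] show ?thesis by linarith
qed

lemma a_le_V: "rr * \<bar>a u k\<bar> \<le> sqrt (V u k)"
  unfolding V_def using rr_pos
  by (intro real_le_rsqrt) (simp add: power_mult_distrib)

lemma w_le_V: "norm (w u k) \<le> sqrt (V u k)"
  unfolding V_def
  by (intro real_le_rsqrt) (simp add: power2_norm_eq_inner)

lemma a_u_bound: assumes "0 \<le> u" "2 * KK * u \<le> 1" "k < m" shows "\<bar>a u k\<bar> \<le> 2 * R k / rr"
  using a_le_V[of u k] sqrtVu[OF assms] rr_pos by (simp add: field_simps)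

lemma w_u_bound: assumes "0 \<le> u" "2 * KK * u \<le> 1" "k < m" shows "norm (w u k) \<le> 2 * R k"
  using w_le_V[of u k] sqrtVu[OF assms] by simp

lemma a_diff: assumes "0 \<le> t" "2 * KK * t \<le> 1" "k < m" "0 \<le> u" "u \<le> t"
  shows "\<bar>a u k - a 0 k\<bar> \<le> u * (KK * 2 * R k / rr)"
proof -
  have "norm (a u k - a 0 k) \<le> (KK * 2 * R k / rr) * (u - 0)"
  proof (rule vec_mvt[of 0 u "\<lambda>s. a s k" "\<lambda>s. Ad s k"])
    fix v assume v: "v \<in> {0..u}"
    have "((\<lambda>s. a s k) has_real_derivative Ad v k) (at v within {0..})" using a_d assms v by auto
    then show "((\<lambda>s. a s k) has_vector_derivative Ad v k) (at v within {0..u})"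
      by (auto simp: has_real_derivative_iff_has_vector_derivative intro: has_vector_derivative_within_subset)
    have "2 * KK * v \<le> 2 * KK * t" using v assms KK_nonneg by (intro mult_left_mono) auto
    then have v2: "2 * KK * v \<le> 1" using assms by linarith
    have "\<bar>Ad v k\<bar> \<le> (1 / rr) * KK * norm (w v k)" using Ad_bound v assms by auto
    also have "\<dots> \<le> (1 / rr) * KK * (2 * R k)"
      using w_u_bound[of v k] v v2 assms rr_pos KK_nonneg by (intro mult_left_mono) auto
    finally show "norm (Ad v k) \<le> KK * 2 * R k / rr" by simp
  qed (use assms in auto)
  then show ?thesis by (simp add: mult_ac)
qed

lemma w_diff: assumes "0 \<le> t" "2 * KK * t \<le> 1" "k < m" "0 \<le> u" "u \<le> t"
  shows "norm (w u k - w 0 k) \<le> u * (2 * KK * R k)"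
proof -
  have "norm (w u k - w 0 k) \<le> (2 * KK * R k) * (u - 0)"
  proof (rule vec_mvt[of 0 u "\<lambda>s. w s k" "\<lambda>s. Wd s k"])
    fix v assume v: "v \<in> {0..u}"
    show "((\<lambda>s. w s k) has_vector_derivative Wd v k) (at v within {0..u})"
      using w_d[of k v] assms v by (auto intro: has_vector_derivative_within_subset)
    have "2 * KK * v \<le> 2 * KK * t" using v assms KK_nonneg by (intro mult_left_mono) auto
    then have v2: "2 * KK * v \<le> 1" using assms by linarith
    have "norm (Wd v k) \<le> rr * KK * \<bar>a v k\<bar>" using Wd_bound v assms by auto
    also have "\<dots> \<le> rr * KK * (2 * R k / rr)"
      using a_u_bound[of v k] v v2 assms rr_pos KK_nonneg by (intro mult_left_mono) auto
    finally show "norm (Wd v k) \<le> 2 * KK * R k" using rr_pos by simp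
  qed (use assms in auto)
  then show ?thesis by (simp add: mult_ac)
qed

end

context traj begin

definition "zz = (1 / real n) *\<^sub>R (\<Sum>i<n. y i *\<^sub>R x i)"

lemma x_le_Xs: "i < n \<Longrightarrow> norm (x i) \<le> Xs"
  unfolding Xs_def by (rule member_le_sum) auto

lemma term_bound:
  assumes Da: "\<bar>au - a0\<bar> \<le> Da" and Ab: "\<bar>au\<bar> \<le> Ab" and Ew: "\<bar>s' - 1\<bar> \<le> CL * Ew * Xs"
    and s': "\<bar>s'\<bar> \<le> CL" and F: "\<bar>f\<bar> \<le> F" and yc: "\<bar>yy\<bar> \<le> c"
  shows "\<bar>- ((f - yy) * au * s') - yy * a0\<bar> \<le> c * (CL * Da + \<bar>a0\<bar> * (CL * Ew * Xs)) + F * Ab * CL"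
proof -
  have eq: "- ((f - yy) * au * s') - yy * a0 = - (f * au * s') + yy * ((au - a0) * s' + a0 * (s' - 1))"
    by (simp add: algebra_simps)
  have 1: "\<bar>f * au * s'\<bar> \<le> F * Ab * CL"
    unfolding abs_mult using F Ab s' by (intro mult_mono) auto
  have 2: "\<bar>(au - a0) * s' + a0 * (s' - 1)\<bar> \<le> CL * Da + \<bar>a0\<bar> * (CL * Ew * Xs)"
  proof -
    have "\<bar>(au - a0) * s'\<bar> \<le> CL * Da" unfolding abs_mult using Da s' by (simp add: mult_mono mult.commute)
    moreover have "\<bar>a0 * (s' - 1)\<bar> \<le> \<bar>a0\<bar> * (CL * Ew * Xs)" unfolding abs_mult using Ew by (intro mult_left_mono) auto
    ultimately show ?thesis by (smt (verit) abs_triangle_ineq)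
  qed
  have 3: "\<bar>yy * ((au - a0) * s' + a0 * (s' - 1))\<bar> \<le> c * (CL * Da + \<bar>a0\<bar> * (CL * Ew * Xs))"
    unfolding abs_mult using yc 2 by (intro mult_mono) auto
  show ?thesis unfolding eq using 1 3 by (smt (verit) abs_triangle_ineq abs_minus_cancel)
qed

lemma Delta_bound:
  assumes t: "0 \<le> t" and k: "k < m" and c: "\<And>i. i < n \<Longrightarrow> \<bar>y i\<bar> \<le> c"
    and H1: "\<And>u. u \<in> {0..t} \<Longrightarrow> \<bar>a u k - a 0 k\<bar> \<le> Da"
    and H2: "\<And>u. u \<in> {0..t} \<Longrightarrow> \<bar>a u k\<bar> \<le> Ab"
    and H3: "\<And>u. u \<in> {0..t} \<Longrightarrow> eps * norm (w u k) \<le> Ew"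
    and H4: "\<And>u i. u \<in> {0..t} \<Longrightarrow> i < n \<Longrightarrow> \<bar>net_out m nu eps \<sigma> (a u) (w u) (x i)\<bar> \<le> F"
  shows "norm (w t k - w 0 k - (t * rr * a 0 k) *\<^sub>R zz)
     \<le> (rr * ((c * (CL * Da + \<bar>a 0 k\<bar> * (CL * Ew * Xs)) + F * Ab * CL) * Xs)) * t"
proof -
  let ?C = "c * (CL * Da + \<bar>a 0 k\<bar> * (CL * Ew * Xs)) + F * Ab * CL"
  have "norm ((w t k - (t * rr * a 0 k) *\<^sub>R zz) - (w 0 k - (0 * rr * a 0 k) *\<^sub>R zz)) \<le> (rr * (?C * Xs)) * (t - 0)"
  proof (rule vec_mvt[of 0 t "\<lambda>s. w s k - (s * rr * a 0 k) *\<^sub>R zz" "\<lambda>s. Wd s k - (rr * a 0 k) *\<^sub>R zz"])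
    fix u assume u: "u \<in> {0..t}"
    have "((\<lambda>s. w s k) has_vector_derivative Wd u k) (at u within {0..t})"
      using w_d[of k u] k u by (auto intro: has_vector_derivative_within_subset)
    then show "((\<lambda>s. w s k - (s * rr * a 0 k) *\<^sub>R zz) has_vector_derivative Wd u k - (rr * a 0 k) *\<^sub>R zz) (at u within {0..t})"
      by (auto intro!: derivative_eq_intros)
    have eqd: "Wd u k - (rr * a 0 k) *\<^sub>R zz = (rr * (1 / real n)) *\<^sub>R
       (\<Sum>i<n. (- (e u i * a u k * \<sigma>' (eps * (w u k \<bullet> x i))) - y i * a 0 k) *\<^sub>R x i)"
      unfolding Wd_def zz_def rr_def
      by (simp add: scaleR_left_diff_distrib sum_subtractf sum_negf scaleR_diff_right scaleR_sum_right mult_ac)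
    have "norm (\<Sum>i<n. (- (e u i * a u k * \<sigma>' (eps * (w u k \<bullet> x i))) - y i * a 0 k) *\<^sub>R x i)
        \<le> (\<Sum>i<n. ?C * norm (x i))"
    proof (rule order_trans[OF norm_sum], intro sum_mono)
      fix i assume i: "i \<in> {..<n}"
      have Ewi: "\<bar>\<sigma>' (eps * (w u k \<bullet> x i)) - 1\<bar> \<le> CL * Ew * Xs"
      proof -
        have "\<bar>\<sigma>' (eps * (w u k \<bullet> x i)) - 1\<bar> \<le> CL * \<bar>eps * (w u k \<bullet> x i)\<bar>" by (rule sig'_bound)
        also have "\<dots> \<le> CL * (eps * norm (w u k) * norm (x i))"
          using CL_ge1 eps_pos Cauchy_Schwarz_ineq2[of "w u k" "x i"]
          by (intro mult_left_mono) (auto simp: abs_mult mult_ac intro: mult_left_mono)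
        also have "\<dots> \<le> CL * (Ew * Xs)"
          using CL_ge1 H3[OF u] x_le_Xs[of i] i eps_pos
          by (intro mult_left_mono mult_mono) (auto intro: order_trans[rotated])
        finally show ?thesis by (simp add: mult_ac)
      qed
      have "\<bar>- (e u i * a u k * \<sigma>' (eps * (w u k \<bullet> x i))) - y i * a 0 k\<bar> \<le> ?C"
        unfolding e_def using i
        by (intro term_bound H1[OF u] H2[OF u] Ewi sb1 H4[OF u] c) auto
      then show "norm ((- (e u i * a u k * \<sigma>' (eps * (w u k \<bullet> x i))) - y i * a 0 k) *\<^sub>R x i) \<le> ?C * norm (x i)"
        by (simp add: mult_right_mono)
    qed
    also have "\<dots> = ?C * Xs" unfolding Xs_def by (simp add: sum_distrib_left)
    finally have nb: "norm (\<Sum>i<n. (- (e u i * a u k * \<sigma>' (eps * (w u k \<bullet> x i))) - y i * a 0 k) *\<^sub>R x i) \<le> ?C * Xs" .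
    have "norm (Wd u k - (rr * a 0 k) *\<^sub>R zz) = rr * (1 / real n) *
        norm (\<Sum>i<n. (- (e u i * a u k * \<sigma>' (eps * (w u k \<bullet> x i))) - y i * a 0 k) *\<^sub>R x i)"
      unfolding eqd using rr_pos by simp
    also have "\<dots> \<le> rr * 1 * (?C * Xs)"
      using nb rr_pos n_pos by (intro mult_mono) (auto simp: field_simps)
    finally show "norm (Wd u k - (rr * a 0 k) *\<^sub>R zz) \<le> rr * (?C * Xs)" by simp
  qed (use t in auto)
  then show ?thesis by (simp add: algebra_simps)
qed

lemma fo_bound: "\<bar>net_out m nu eps \<sigma> (a u) (w u) (x i)\<bar> \<le> (\<Sum>k<m. nu * \<bar>a u k\<bar> * CL * (eps * norm (w u k)) * norm (x i))"
  unfolding net_out_def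
proof (rule order_trans[OF sum_abs], intro sum_mono)
  fix k
  have "\<bar>\<sigma> (eps * (w u k \<bullet> x i))\<bar> \<le> CL * \<bar>eps * (w u k \<bullet> x i)\<bar>" by (rule sig_bound)
  also have "\<dots> \<le> CL * (eps * norm (w u k) * norm (x i))"
    using CL_ge1 eps_pos Cauchy_Schwarz_ineq2[of "w u k" "x i"]
    by (intro mult_left_mono) (auto simp: abs_mult mult_ac intro: mult_left_mono)
  finally have h: "\<bar>\<sigma> (eps * (w u k \<bullet> x i))\<bar> \<le> CL * (eps * norm (w u k) * norm (x i))" .
  show "\<bar>nu * a u k * \<sigma> (eps * (w u k \<bullet> x i))\<bar> \<le> nu * \<bar>a u k\<bar> * CL * (eps * norm (w u k)) * norm (x i)"
    using mult_left_mono[OF h, of "nu * \<bar>a u k\<bar>"] nu_pos by (simp add: abs_mult mult_ac)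
qed

end

lemma tw_L2: "theta_w_norm m w = L2_set (\<lambda>k. norm (w k)) {..<m}"
  unfolding theta_w_norm_def L2_set_def by simp

lemma twz_L2: "theta_wz_norm m zh w = L2_set (\<lambda>k. w k \<bullet> zh) {..<m}"
  unfolding theta_wz_norm_def L2_set_def by simp

lemma L2_abs: "L2_set (\<lambda>k. \<bar>f k\<bar>) A = L2_set f A"
  unfolding L2_set_def by simp

lemma L2_diff_ge:
  assumes "\<And>k. k \<in> A \<Longrightarrow> 0 \<le> g k" "\<And>k. k \<in> A \<Longrightarrow> g k \<le> f k + h k" "\<And>k. k \<in> A \<Longrightarrow> 0 \<le> h k"
  shows "L2_set g A - L2_set h A \<le> L2_set f A"
proof -
  have "L2_set g A \<le> L2_set (\<lambda>k. f k + h k) A" using assms by (intro L2_set_mono) auto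
  also have "\<dots> \<le> L2_set f A + L2_set h A" by (rule L2_set_triangle_ineq)
  finally show ?thesis by simp
qed

lemma claim1_alg:
  fixes Wt W0 :: "nat \<Rightarrow> real^'d" and z :: "real^'d"
  assumes lam: "0 \<le> lam"
  shows "lam * norm z * L2_set a0 {..<m} - L2_set (\<lambda>k. norm (Wt k - W0 k - (lam * a0 k) *\<^sub>R z)) {..<m}
     \<le> theta_w_norm m (\<lambda>k. Wt k - W0 k)"
proof -
  have "L2_set (\<lambda>k. lam * norm z * \<bar>a0 k\<bar>) {..<m} - L2_set (\<lambda>k. norm (Wt k - W0 k - (lam * a0 k) *\<^sub>R z)) {..<m}
     \<le> L2_set (\<lambda>k. norm (Wt k - W0 k)) {..<m}"
  proof (rule L2_diff_ge)
    fix k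
    have "norm ((lam * a0 k) *\<^sub>R z) \<le> norm (Wt k - W0 k) + norm (Wt k - W0 k - (lam * a0 k) *\<^sub>R z)"
      using norm_triangle_ineq4[of "Wt k - W0 k" "Wt k - W0 k - (lam * a0 k) *\<^sub>R z"] by simp
    then show "lam * norm z * \<bar>a0 k\<bar> \<le> norm (Wt k - W0 k) + norm (Wt k - W0 k - (lam * a0 k) *\<^sub>R z)"
      using lam by (simp add: abs_mult mult_ac)
  qed (use lam in auto)
  moreover have "L2_set (\<lambda>k. lam * norm z * \<bar>a0 k\<bar>) {..<m} = lam * norm z * L2_set a0 {..<m}"
    using lam by (simp add: L2_set_right_distrib[symmetric] L2_abs)
  ultimately show ?thesis unfolding tw_L2 by simp
qed

lemma proj_norm: fixes v zh :: "real^'d" assumes "norm zh = 1"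
  shows "norm v ^ 2 = (v \<bullet> zh)^2 + norm (v - (v \<bullet> zh) *\<^sub>R zh) ^ 2"
proof -
  have "zh \<bullet> zh = 1" using assms by (simp add: power2_norm_eq_inner[symmetric])
  then show ?thesis
    unfolding power2_norm_eq_inner
    by (simp add: inner_diff_left inner_diff_right power2_eq_square algebra_simps inner_commute)
qed

lemma proj_le: fixes v zh :: "real^'d" assumes "norm zh = 1"
  shows "norm (v - (v \<bullet> zh) *\<^sub>R zh) \<le> norm v"
proof -
  have "norm (v - (v \<bullet> zh) *\<^sub>R zh) ^ 2 \<le> norm v ^ 2" using proj_norm[OF assms, of v] by simp
  then show ?thesis by (rule power2_le_imp_le) simp
qed

lemma ratio_le1: fixes zh :: "real^'d" assumes "norm zh = 1"
  shows "theta_wz_norm m zh W / theta_w_norm m W \<le> 1"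
proof -
  have "L2_set (\<lambda>k. W k \<bullet> zh) {..<m} = L2_set (\<lambda>k. \<bar>W k \<bullet> zh\<bar>) {..<m}" by (simp add: L2_abs)
  also have "\<dots> \<le> L2_set (\<lambda>k. norm (W k)) {..<m}"
    using assms Cauchy_Schwarz_ineq2[of "W _" zh] by (intro L2_set_mono) auto
  finally have "theta_wz_norm m zh W \<le> theta_w_norm m W" unfolding tw_L2 twz_L2 .
  moreover have "0 \<le> theta_w_norm m W" by (simp add: tw_L2)
  ultimately show ?thesis by (cases "theta_w_norm m W = 0") (auto simp: divide_le_eq_1)
qed

lemma claim2_alg:
  fixes Wt W0 :: "nat \<Rightarrow> real^'d" and zh :: "real^'d"
  assumes zh: "norm zh = 1" and lam: "0 \<le> lam" and zn: "0 \<le> nz"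
    and S0: "L2_set (\<lambda>k. norm (W0 k)) {..<m} \<le> S0"
    and D: "L2_set (\<lambda>k. norm (Wt k - W0 k - (lam * a0 k * nz) *\<^sub>R zh)) {..<m} \<le> D"
    and pos: "S0 + D < lam * nz * L2_set a0 {..<m} - (S0 + D)"
  shows "1 - (S0 + D) / (lam * nz * L2_set a0 {..<m} - (S0 + D)) \<le> theta_wz_norm m zh Wt / theta_w_norm m Wt"
proof -
  define Dk where "Dk k = Wt k - W0 k - (lam * a0 k * nz) *\<^sub>R zh" for k
  have Wt: "Wt k = W0 k + (lam * a0 k * nz) *\<^sub>R zh + Dk k" for k unfolding Dk_def by simp
  have S0n: "0 \<le> S0" using S0 order_trans[OF L2_set_nonneg] by blast
  have Dn: "0 \<le> D" using D order_trans[OF L2_set_nonneg] by blast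
  define Z where "Z = theta_wz_norm m zh Wt"
  define P where "P = L2_set (\<lambda>k. norm (Wt k - (Wt k \<bullet> zh) *\<^sub>R zh)) {..<m}"
  have zz: "zh \<bullet> zh = 1" using zh by (simp add: power2_norm_eq_inner[symmetric])
  have "L2_set (\<lambda>k. lam * nz * \<bar>a0 k\<bar>) {..<m} - L2_set (\<lambda>k. norm (W0 k) + norm (Dk k)) {..<m}
      \<le> L2_set (\<lambda>k. \<bar>Wt k \<bullet> zh\<bar>) {..<m}"
  proof (rule L2_diff_ge)
    fix k
    have "Wt k \<bullet> zh = W0 k \<bullet> zh + lam * a0 k * nz + Dk k \<bullet> zh"
      unfolding Wt by (simp add: inner_add_left zz)
    moreover have "\<bar>W0 k \<bullet> zh\<bar> \<le> norm (W0 k)" "\<bar>Dk k \<bullet> zh\<bar> \<le> norm (Dk k)"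
      using zh Cauchy_Schwarz_ineq2[of "W0 k" zh] Cauchy_Schwarz_ineq2[of "Dk k" zh] by auto
    ultimately show "lam * nz * \<bar>a0 k\<bar> \<le> \<bar>Wt k \<bullet> zh\<bar> + (norm (W0 k) + norm (Dk k))"
    proof -
      have "\<bar>lam * a0 k * nz\<bar> = lam * nz * \<bar>a0 k\<bar>" using lam zn by (simp add: abs_mult)
      moreover note \<open>Wt k \<bullet> zh = W0 k \<bullet> zh + lam * a0 k * nz + Dk k \<bullet> zh\<close> \<open>\<bar>W0 k \<bullet> zh\<bar> \<le> norm (W0 k)\<close> \<open>\<bar>Dk k \<bullet> zh\<bar> \<le> norm (Dk k)\<close>
      moreover have "\<bar>lam * a0 k * nz\<bar> \<le> \<bar>Wt k \<bullet> zh\<bar> + (\<bar>W0 k \<bullet> zh\<bar> + \<bar>Dk k \<bullet> zh\<bar>)"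
        unfolding abs_le_iff using \<open>Wt k \<bullet> zh = W0 k \<bullet> zh + lam * a0 k * nz + Dk k \<bullet> zh\<close>
          abs_ge_self[of "Wt k \<bullet> zh"] abs_ge_minus_self[of "Wt k \<bullet> zh"]
          abs_ge_self[of "W0 k \<bullet> zh"] abs_ge_minus_self[of "W0 k \<bullet> zh"]
          abs_ge_self[of "Dk k \<bullet> zh"] abs_ge_minus_self[of "Dk k \<bullet> zh"] by linarith
      ultimately show ?thesis by linarith
    qed
  qed (use lam zn in auto)
  moreover have "L2_set (\<lambda>k. lam * nz * \<bar>a0 k\<bar>) {..<m} = lam * nz * L2_set a0 {..<m}"
    using lam zn by (simp add: L2_set_right_distrib[symmetric] L2_abs)
  moreover have "L2_set (\<lambda>k. norm (W0 k) + norm (Dk k)) {..<m} \<le> S0 + D"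
    using L2_set_triangle_ineq[of "\<lambda>k. norm (W0 k)" "\<lambda>k. norm (Dk k)" "{..<m}"] S0 D unfolding Dk_def by linarith
  ultimately have Zge: "lam * nz * L2_set a0 {..<m} - (S0 + D) \<le> Z"
    unfolding Z_def twz_L2 L2_abs by linarith
  have "P \<le> L2_set (\<lambda>k. norm (W0 k) + norm (Dk k)) {..<m}"
    unfolding P_def
  proof (intro L2_set_mono)
    fix k
    have "Wt k - (Wt k \<bullet> zh) *\<^sub>R zh = (W0 k - (W0 k \<bullet> zh) *\<^sub>R zh) + (Dk k - (Dk k \<bullet> zh) *\<^sub>R zh)"
      unfolding Wt by (simp add: inner_add_left zz algebra_simps)
    then have "norm (Wt k - (Wt k \<bullet> zh) *\<^sub>R zh) \<le> norm (W0 k - (W0 k \<bullet> zh) *\<^sub>R zh) + norm (Dk k - (Dk k \<bullet> zh) *\<^sub>R zh)"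
      by (metis norm_triangle_ineq)
    then show "norm (Wt k - (Wt k \<bullet> zh) *\<^sub>R zh) \<le> norm (W0 k) + norm (Dk k)"
      using proj_le[OF zh, of "W0 k"] proj_le[OF zh, of "Dk k"] by linarith
  qed auto
  also have "\<dots> \<le> S0 + D"
    using L2_set_triangle_ineq[of "\<lambda>k. norm (W0 k)" "\<lambda>k. norm (Dk k)" "{..<m}"] S0 D unfolding Dk_def by linarith
  finally have Ple: "P \<le> S0 + D" .
  have sd: "(\<Sum>k<m. norm (Wt k) ^ 2) = (\<Sum>k<m. (Wt k \<bullet> zh)^2) + (\<Sum>k<m. norm (Wt k - (Wt k \<bullet> zh) *\<^sub>R zh) ^ 2)"
    by (subst sum.distrib[symmetric]) (rule sum.cong[OF refl], rule proj_norm[OF zh])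
  have "(theta_w_norm m Wt)^2 = Z^2 + P^2"
    unfolding tw_L2 Z_def twz_L2 P_def L2_set_def
    by (simp only: real_sqrt_pow2 sum_nonneg zero_le_power2 sd) (simp add: sum_nonneg)
  note sq = this
  have Zpos: "0 < Z" using Zge pos S0n Dn by linarith
  have Pn: "0 \<le> P" unfolding P_def by (rule L2_set_nonneg)
  have ZP: "0 \<le> 2 * Z * P" using Zpos Pn by simp
  have "(theta_w_norm m Wt)^2 \<le> (Z + P)^2" using sq ZP unfolding power2_sum by linarith
  then have twle: "theta_w_norm m Wt \<le> Z + P"
    by (rule power2_le_imp_le) (use Zpos Pn in auto)
  have "Z^2 \<le> (theta_w_norm m Wt)^2" using sq zero_le_power2[of P] by linarith
  then have "Z \<le> theta_w_norm m Wt" by (rule power2_le_imp_le) (simp add: tw_L2)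
  then have twpos: "0 < theta_w_norm m Wt" using Zpos by linarith
  have "1 - (S0 + D) / (lam * nz * L2_set a0 {..<m} - (S0 + D)) \<le> 1 - P / Z"
  proof -
    have "P / Z \<le> (S0 + D) / Z" using Ple Zpos by (simp add: divide_right_mono)
    also have "\<dots> \<le> (S0 + D) / (lam * nz * L2_set a0 {..<m} - (S0 + D))"
      using Zge pos S0n Dn by (intro divide_left_mono) auto
    finally show ?thesis by simp
  qed
  also have "1 - P / Z \<le> Z / (Z + P)"
  proof -
    have "(Z - P) * (Z + P) \<le> Z * Z" by (simp add: algebra_simps)
    then have "(Z - P) / Z \<le> Z / (Z + P)" using Zpos Pn by (simp add: frac_le_eq divide_nonpos_pos)
    then show ?thesis using Zpos by (simp add: diff_divide_distrib)
  qed
  also have "Z / (Z + P) \<le> Z / theta_w_norm m Wt"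
    using twle twpos Zpos Pn by (intro divide_left_mono) auto
  finally show ?thesis unfolding Z_def .
qed

lemma pmax_le: assumes "m > 0" "\<And>k. k < m \<Longrightarrow> \<bar>a k\<bar> \<le> B \<and> norm (w k) \<le> B"
  shows "p_max m a w \<le> B"
  unfolding p_max_def neuron_energy_def
  using assms by (subst Max_le_iff) (auto intro: order_trans[OF infnorm_le_norm])

lemma pmax_ge0: assumes "m > 0" shows "0 \<le> p_max m a w"
proof -
  have "neuron_energy a w 0 \<le> p_max m a w" unfolding p_max_def using assms by (intro Max_ge) auto
  moreover have "0 \<le> neuron_energy a w 0" unfolding neuron_energy_def by simp
  ultimately show ?thesis by linarith
qed

lemma psi_bounds: assumes "m > 0" "0 \<le> s"
  and "\<And>u k. u \<in> {0..s} \<Longrightarrow> k < m \<Longrightarrow> \<bar>a u k\<bar> \<le> B \<and> norm (w u k) \<le> B"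
  shows "psi m a w s \<le> B" "0 \<le> psi m a w s"
proof -
  have ne: "(\<lambda>u. p_max m (a u) (w u)) ` {0..s} \<noteq> {}" using assms by auto
  have ub: "\<And>u. u \<in> {0..s} \<Longrightarrow> p_max m (a u) (w u) \<le> B" using assms by (intro pmax_le) auto
  show "psi m a w s \<le> B" unfolding psi_def using ne ub by (intro cSup_least) auto
  have "p_max m (a 0) (w 0) \<le> psi m a w s" unfolding psi_def
    using ub assms(2) by (intro cSup_upper) (auto simp: bdd_above_def intro!: exI[of _ B])
  then show "0 \<le> psi m a w s" using pmax_ge0[OF assms(1), of "a 0" "w 0"] by linarith
qed

lemma T_eff_ge:
  assumes "\<And>s. 0 < s \<Longrightarrow> s \<le> t \<Longrightarrow> real m * nu * eps * (psi m a w s)^3 + eps * (psi m a w s)^2 \<le> real m powr (- (- gamma' / beta))"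
  shows "ereal t \<le> T_eff m nu eps gamma' beta a w"
  unfolding T_eff_def Let_def
proof (rule Inf_greatest)
  fix r assume "r \<in> ereal ` {t. 0 < t \<and> real m * nu * eps * (psi m a w t)^3 + eps * (psi m a w t)^2 > real m powr (- (- gamma' / beta))}"
  then obtain s where s: "r = ereal s" "0 < s" "real m * nu * eps * (psi m a w s)^3 + eps * (psi m a w s)^2 > real m powr (- (- gamma' / beta))"
    by auto
  have "\<not> s \<le> t" using assms[of s] s by force
  then show "ereal t \<le> r" using s by simp
qed

context traj begin

lemma main_det:
  fixes Q lamb K0 c gamma' beta t Wb F Dn :: real
  assumes m: "m > 0" and yc: "\<And>i. i < n \<Longrightarrow> \<bar>y i\<bar> \<le> c"
    and Q: "\<And>k. k < m \<Longrightarrow> \<bar>a 0 k\<bar> \<le> Q \<and> norm (w 0 k) \<le> Q"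
    and rr1: "1 \<le> rr" and lamb: "0 < lamb"
    and K0: "KK \<le> K0" and tK: "2 * K0 * (lamb / rr) \<le> 1"
    and psi_c: "real m * nu * eps * (Q * (5 + 4*K0*lamb))^3 + eps * (Q * (5 + 4*K0*lamb))^2 \<le> real m powr (- (- gamma' / beta))"
  assumes t_def: "t = lamb / rr"
    and Wb_def: "Wb = Q * (1 + 4 * K0 * lamb)"
    and F_def: "F = real m * nu * (4*Q) * CL * (eps * Wb) * Xs"
    and Dn_def: "Dn = Xs * (c * (CL * (t * K0 * 4 * Q) + Q * (CL * (eps * Wb) * Xs)) + F * (4 * Q) * CL)"
  shows "ereal t \<le> T_eff m nu eps gamma' beta a w"
    and "lamb * norm zz * L2_set (a 0) {..<m} - sqrt m * (lamb * Dn) \<le> theta_w_norm m (\<lambda>k. w t k - w 0 k)"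
    and "norm zz > 0 \<Longrightarrow> sqrt m * Q + sqrt m * (lamb * Dn) < lamb * norm zz * L2_set (a 0) {..<m} - (sqrt m * Q + sqrt m * (lamb*Dn)) \<Longrightarrow>
        1 - (sqrt m * Q + sqrt m * (lamb*Dn)) / (lamb * norm zz * L2_set (a 0) {..<m} - (sqrt m * Q + sqrt m*(lamb*Dn)))
          \<le> theta_wz_norm m ((1/norm zz) *\<^sub>R zz) (w t) / theta_w_norm m (w t)"
proof -
  have Q0: "0 \<le> Q" using Q[OF m] by (meson abs_ge_zero order_trans)
  have c0: "0 \<le> c" using yc[OF n_pos] by (meson abs_ge_zero order_trans)
  have t0: "0 \<le> t" unfolding t_def using lamb rr_pos by simp
  have K00: "0 \<le> K0" using K0 KK_nonneg by linarith
  have tK': "2 * KK * t \<le> 1" using tK K0 t0 unfolding t_def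
    by (meson KK_nonneg mult_right_mono order_trans mult_left_mono zero_le_numeral)
  have lt: "lamb = rr * t" unfolding t_def using rr_pos by simp
  have Rb: "R k \<le> 2 * rr * Q" if "k < m" for k
  proof -
    have "rr * \<bar>a 0 k\<bar> \<le> rr * Q" using Q[OF that] rr_pos by (intro mult_left_mono) auto
    moreover have "1 * Q \<le> rr * Q" using rr1 Q0 by (intro mult_right_mono) auto
    ultimately show ?thesis unfolding R_def using Q[OF that] by linarith
  qed
  have uK: "2 * KK * u \<le> 1" if "u \<in> {0..t}" for u
  proof -
    have "2 * KK * u \<le> 2 * KK * t" using that KK_nonneg by (intro mult_left_mono) auto
    then show ?thesis using tK' by linarith
  qed
  have Ab: "\<bar>a u k\<bar> \<le> 4 * Q" if "u \<in> {0..t}" "k < m" for u k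
  proof -
    have "\<bar>a u k\<bar> \<le> 2 * R k / rr" using a_u_bound[of u k] that uK[OF that(1)] by auto
    also have "\<dots> \<le> 4 * Q" using Rb[OF that(2)] rr_pos by (simp add: divide_le_eq algebra_simps)
    finally show ?thesis .
  qed
  have Da: "\<bar>a u k - a 0 k\<bar> \<le> t * K0 * 4 * Q" if "u \<in> {0..t}" "k < m" for u k
  proof -
    have "\<bar>a u k - a 0 k\<bar> \<le> u * (KK * 2 * R k / rr)" using a_diff[OF t0 tK' that(2)] that(1) by auto
    also have "\<dots> \<le> t * (K0 * 2 * (2 * rr * Q) / rr)"
      using that Rb[OF that(2)] rr_pos K0 KK_nonneg R_nonneg[of k] Q0
      by (intro mult_mono divide_right_mono) auto
    finally show ?thesis using rr_pos by simp
  qed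
  have Wbd: "norm (w u k) \<le> Wb" if "u \<in> {0..t}" "k < m" for u k
  proof -
    have "norm (w u k - w 0 k) \<le> u * (2 * KK * R k)" using w_diff[OF t0 tK' that(2)] that(1) by auto
    also have "\<dots> \<le> t * (2 * K0 * (2 * rr * Q))"
      using that Rb[OF that(2)] rr_pos K0 KK_nonneg R_nonneg[of k] Q0
      by (intro mult_mono) auto
    also have "\<dots> = 4 * K0 * lamb * Q" unfolding lt by simp
    finally have "norm (w u k - w 0 k) \<le> 4 * K0 * lamb * Q" .
    moreover have "norm (w u k) \<le> norm (w 0 k) + norm (w u k - w 0 k)" by (metis norm_triangle_sub)
    ultimately show ?thesis unfolding Wb_def using Q[OF that(2)] by (simp add: algebra_simps)
  qed
  have Wb0: "0 \<le> Wb" unfolding Wb_def using Q0 K00 lamb by simp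
  have Fb: "\<bar>net_out m nu eps \<sigma> (a u) (w u) (x i)\<bar> \<le> F" if "u \<in> {0..t}" "i < n" for u i
  proof -
    have "\<bar>net_out m nu eps \<sigma> (a u) (w u) (x i)\<bar> \<le> (\<Sum>k<m. nu * \<bar>a u k\<bar> * CL * (eps * norm (w u k)) * norm (x i))"
      by (rule fo_bound)
    also have "\<dots> \<le> (\<Sum>k<m. nu * (4 * Q) * CL * (eps * Wb) * Xs)"
      using Ab[OF that(1)] Wbd[OF that(1)] x_le_Xs[OF that(2)] nu_pos eps_pos CL_ge1 Q0 Wb0
      by (intro sum_mono mult_mono mult_left_mono) auto
    also have "\<dots> = F" unfolding F_def by simp
    finally show ?thesis .
  qed
  show "ereal t \<le> T_eff m nu eps gamma' beta a w"
  proof (rule T_eff_ge)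
    fix s assume s: "0 < s" "s \<le> t"
    let ?B = "Q * (5 + 4*K0*lamb)"
    have "psi m a w s \<le> ?B \<and> 0 \<le> psi m a w s"
    proof -
      have "\<bar>a u k\<bar> \<le> ?B \<and> norm (w u k) \<le> ?B" if "u \<in> {0..s}" "k < m" for u k
      proof -
        have u: "u \<in> {0..t}" using that s by auto
        have "4 * Q \<le> ?B" "Wb \<le> ?B" unfolding Wb_def using Q0 K00 lamb
          by (simp_all add: algebra_simps mult_nonneg_nonneg)
        then show ?thesis using Ab[OF u that(2)] Wbd[OF u that(2)] by linarith
      qed
      then show ?thesis using psi_bounds[OF m, where s=s and a=a and w=w and B="?B"] s by auto
    qed
    then have p: "psi m a w s \<le> ?B" "0 \<le> psi m a w s" by auto
    have "real m * nu * eps * (psi m a w s)^3 + eps * (psi m a w s)^2 \<le> real m * nu * eps * ?B^3 + eps * ?B^2"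
      using p nu_pos eps_pos by (intro add_mono mult_left_mono power_mono) auto
    then show "real m * nu * eps * (psi m a w s)^3 + eps * (psi m a w s)^2 \<le> real m powr (- (- gamma' / beta))"
      using psi_c by linarith
  qed
  have Dk: "norm (w t k - w 0 k - (lamb * a 0 k) *\<^sub>R zz) \<le> lamb * Dn" if k: "k < m" for k
  proof -
    have "norm (w t k - w 0 k - (t * rr * a 0 k) *\<^sub>R zz)
       \<le> (rr * ((c * (CL * (t * K0 * 4 * Q) + \<bar>a 0 k\<bar> * (CL * (eps * Wb) * Xs)) + F * (4 * Q) * CL) * Xs)) * t"
      using Da[OF _ k] Ab[OF _ k] Wbd[OF _ k] Fb eps_pos
      by (intro Delta_bound[OF t0 k yc]) auto
    also have "\<dots> \<le> (rr * ((c * (CL * (t * K0 * 4 * Q) + Q * (CL * (eps * Wb) * Xs)) + F * (4 * Q) * CL) * Xs)) * t"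
      using Q[OF k] c0 CL_ge1 eps_pos Wb0 Xs_nonneg rr_pos t0
      by (intro mult_right_mono mult_left_mono add_mono) auto
    also have "\<dots> = lamb * Dn" unfolding Dn_def lt by (simp add: mult_ac)
    finally show ?thesis unfolding lt by (simp add: mult_ac)
  qed
  have DL2: "L2_set (\<lambda>k. norm (w t k - w 0 k - (lamb * a 0 k) *\<^sub>R zz)) {..<m} \<le> sqrt m * (lamb * Dn)"
  proof -
    have "L2_set (\<lambda>k. norm (w t k - w 0 k - (lamb * a 0 k) *\<^sub>R zz)) {..<m} \<le> L2_set (\<lambda>k. lamb * Dn) {..<m}"
      using Dk by (intro L2_set_mono) auto
    also have "\<dots> = sqrt m * \<bar>lamb * Dn\<bar>" by (simp add: L2_set_constant)
    also have "\<bar>lamb * Dn\<bar> = lamb * Dn" using Dk[OF m] by (meson abs_of_nonneg norm_ge_zero order_trans)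
    finally show ?thesis .
  qed
  show "lamb * norm zz * L2_set (a 0) {..<m} - sqrt m * (lamb * Dn) \<le> theta_w_norm m (\<lambda>k. w t k - w 0 k)"
    using claim1_alg[of lamb zz "a 0" m "w t" "w 0"] DL2 lamb by linarith
  assume zpos: "norm zz > 0"
    and pos: "sqrt m * Q + sqrt m * (lamb * Dn) < lamb * norm zz * L2_set (a 0) {..<m} - (sqrt m * Q + sqrt m * (lamb*Dn))"
  have zeq: "(lamb * a 0 k) *\<^sub>R zz = (lamb * a 0 k * norm zz) *\<^sub>R ((1/norm zz) *\<^sub>R zz)" for k
    using zpos by simp
  have S0: "L2_set (\<lambda>k. norm (w 0 k)) {..<m} \<le> sqrt m * Q"
  proof -
    have "L2_set (\<lambda>k. norm (w 0 k)) {..<m} \<le> L2_set (\<lambda>k. Q) {..<m}" using Q by (intro L2_set_mono) auto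
    then show ?thesis using Q0 by (simp add: L2_set_constant)
  qed
  show "1 - (sqrt m * Q + sqrt m * (lamb*Dn)) / (lamb * norm zz * L2_set (a 0) {..<m} - (sqrt m * Q + sqrt m*(lamb*Dn)))
          \<le> theta_wz_norm m ((1/norm zz) *\<^sub>R zz) (w t) / theta_w_norm m (w t)"
    using claim2_alg[of "(1/norm zz) *\<^sub>R zz" lamb "norm zz" "w 0" m "sqrt m * Q" "w t" "a 0" "sqrt m * (lamb * Dn)"]
      zpos lamb S0 DL2 pos unfolding zeq[symmetric] by simp
qed

end

lemma powr_rep:
  assumes "f m > 0" "m \<ge> 2"
  shows "f m = real m powr (- (- ln (f m) / ln (real m)))"
proof -
  have "ln (real m) > 0" using assms(2) by simp
  then have "real m powr (- (- ln (f m) / ln (real m))) = exp (ln (f m))"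
    unfolding powr_def using assms(2) by simp
  then show ?thesis using assms(1) by simp
qed

lemma powr_lim0:
  assumes e: "(e \<longlongrightarrow> e0) sequentially" and e0: "e0 < 0"
  shows "((\<lambda>m. real m powr e m) \<longlongrightarrow> 0) sequentially"
proof -
  have ev: "eventually (\<lambda>m. e m \<le> e0 / 2) sequentially"
    using order_tendstoD(2)[OF e, of "e0/2"] e0 by (auto elim: eventually_mono)
  have lim: "((\<lambda>m. real m powr (e0 / 2)) \<longlongrightarrow> 0) sequentially"
    using e0 by (intro tendsto_neg_powr filterlim_real_sequentially) auto
  show ?thesis
  proof (rule tendsto_sandwich[OF _ _ tendsto_const lim])
    show "eventually (\<lambda>m. 0 \<le> real m powr e m) sequentially" by simp
    show "eventually (\<lambda>m. real m powr e m \<le> real m powr (e0 / 2)) sequentially"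
      using ev eventually_ge_at_top[of 1]
      by eventually_elim (auto intro: powr_mono)
  qed
qed

lemma piece0:
  assumes "eventually (\<lambda>m. f m = C * real m powr e m) sequentially" "(e \<longlongrightarrow> e0) sequentially" "e0 < 0"
  shows "(f \<longlongrightarrow> 0) sequentially"
proof -
  have "((\<lambda>m. C * real m powr e m) \<longlongrightarrow> C * 0) sequentially"
    by (intro tendsto_mult tendsto_const powr_lim0[OF assms(2,3)])
  then show ?thesis using assms(1) by (simp add: tendsto_cong)
qed

lemma beta_tau:
  fixes g1 g2 :: real
  assumes gg: "g1 + g2 > 1" and gg': "g1 - g2 < 0"
  defines "tau \<equiv> - (g1 - g2) / beta_bar (g1 + g2) (g1 - g2)"
  shows "0 < tau" "tau < g1 + g2 - 1" "tau < g2"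
proof -
  let ?b = "beta_bar (g1 + g2) (g1 - g2)"
  have b1: "-1024 * (g1 - g2) / (g1 + g2 - 1) \<le> ?b" unfolding beta_bar_def by simp
  have p1: "0 < -1024 * (g1 - g2) / (g1 + g2 - 1)" using gg gg' by (simp add: divide_pos_pos)
  have bpos: "0 < ?b" using b1 p1 by linarith
  show "0 < tau" unfolding tau_def using bpos gg' by (simp add: divide_pos_pos)
  have "tau \<le> - (g1 - g2) / (-1024 * (g1 - g2) / (g1 + g2 - 1))"
    unfolding tau_def
    apply (rule divide_left_mono[OF b1])
    using gg' apply simp
    by (rule mult_pos_pos[OF bpos p1])
  also have "\<dots> = (g1 + g2 - 1) / 1024" using gg gg' by (simp add: field_simps)
  finally have "tau \<le> (g1 + g2 - 1) / 1024" .
  moreover have "(g1 + g2 - 1) / 1024 < g1 + g2 - 1" using gg by simp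
  ultimately show "tau < g1 + g2 - 1" by linarith
  have "(g1 + g2 - 1) / 1024 < g2" using gg gg' by (simp add: divide_less_eq)
  then show "tau < g2" using \<open>tau \<le> (g1 + g2 - 1) / 1024\<close> by linarith
qed

lemma asym:
  fixes nu eps :: "nat \<Rightarrow> real" and g1 g2 Dd K0 Xs CL c zn kap eta tau :: real
    and Q lamb rr t Wb F Dn :: "nat \<Rightarrow> real"
  assumes nu_pos: "\<And>m. nu m > 0" and eps_pos: "\<And>m. eps m > 0"
    and lim1: "((\<lambda>m. - ln (nu m) / ln (real m)) \<longlongrightarrow> g1) sequentially"
    and lim2: "((\<lambda>m. - ln (eps m) / ln (real m)) \<longlongrightarrow> g2) sequentially"
    and gg: "g1 + g2 > 1" and gg': "g1 - g2 < 0"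
    and Dd: "1 \<le> Dd" and K0: "0 \<le> K0" and Xs: "0 \<le> Xs" and CL: "0 \<le> CL" and c: "0 \<le> c" and zn: "0 < zn"
    and tau_def: "tau = - (g1 - g2) / beta_bar (g1 + g2) (g1 - g2)"
    and kap_def: "kap = min (min (g1 + g2 - 1 - tau) (g2 - tau)) (g2 - g1) / 16"
    and eta_def: "eta = 2 * kap"
    and Q_def: "Q = (\<lambda>m. Dd * real m powr kap)"
    and lamb_def: "lamb = (\<lambda>m. real m powr eta)"
    and rr_def: "rr = (\<lambda>m. nu m / eps m)"
    and t_def: "t = (\<lambda>m. lamb m / rr m)"
    and Wb_def: "Wb = (\<lambda>m. Q m * (1 + 4 * K0 * lamb m))"
    and F_def: "F = (\<lambda>m. real m * nu m * (4 * Q m) * CL * (eps m * Wb m) * Xs)"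
    and Dn_def: "Dn = (\<lambda>m. Xs * (c * (CL * (t m * K0 * 4 * Q m) + Q m * (CL * (eps m * Wb m) * Xs)) + F m * (4 * Q m) * CL))"
  shows "0 < kap" "kap < eta"
    "eventually (\<lambda>m. 1 \<le> rr m \<and> 2 * K0 * (lamb m / rr m) \<le> 1
       \<and> real m * nu m * eps m * (Q m * (5 + 4 * K0 * lamb m))^3 + eps m * (Q m * (5 + 4 * K0 * lamb m))^2 \<le> real m powr (- tau)
       \<and> real m * nu m * eps m * CL * Xs * (Q m)^2 \<le> 1
       \<and> 2 * (Q m + lamb m * Dn m) < lamb m * zn / sqrt 8
       \<and> 0 < Q m \<and> 0 < lamb m) sequentially"
    "\<And>r. eventually (\<lambda>m. r < lamb m * (zn / sqrt 8 - Dn m) / Q m) sequentially"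
    "((\<lambda>m. (Q m + lamb m * Dn m) / (lamb m * zn / sqrt 8 - (Q m + lamb m * Dn m))) \<longlongrightarrow> 0) sequentially"
proof -
  have tau: "0 < tau" "tau < g1 + g2 - 1" "tau < g2" using beta_tau[OF gg gg'] tau_def by auto
  define s0 where "s0 = min (min (g1 + g2 - 1 - tau) (g2 - tau)) (g2 - g1)"
  have s0: "0 < s0" unfolding s0_def using tau gg' by simp
  have kap: "kap = s0 / 16" unfolding kap_def s0_def by simp
  show kap0: "0 < kap" using s0 kap by simp
  show "kap < eta" using kap0 eta_def by simp
  have s1: "s0 \<le> g1 + g2 - 1 - tau" "s0 \<le> g2 - tau" "s0 \<le> g2 - g1" unfolding s0_def by auto
  define al where "al m = - ln (nu m) / ln (real m)" for m
  define be where "be m = - ln (eps m) / ln (real m)" for m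
  have al: "(al \<longlongrightarrow> g1) sequentially" using lim1 unfolding al_def .
  have be: "(be \<longlongrightarrow> g2) sequentially" using lim2 unfolding be_def .
  have ev2: "eventually (\<lambda>m. m \<ge> (2::nat)) sequentially" by (rule eventually_ge_at_top)
  have rep: "eventually (\<lambda>m. nu m = real m powr (- al m) \<and> eps m = real m powr (- be m) \<and> real m > 0) sequentially"
    using ev2 by eventually_elim (use powr_rep[of nu] powr_rep[of eps] nu_pos eps_pos al_def be_def in auto)
  have p_t: "((\<lambda>m. t m) \<longlongrightarrow> 0) sequentially"
  proof (rule piece0[where C="1" and e="\<lambda>m. eta - be m + al m" and ?e0.0="eta - g2 + g1"])
    show "eventually (\<lambda>m. t m = 1 * real m powr (eta - be m + al m)) sequentially"
      using rep proof eventually_elim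
      case (elim m)
      then show ?case by (simp add: Q_def lamb_def t_def rr_def power_mult_distrib powr_power powr_add powr_diff powr_minus divide_inverse mult_ac)
    qed
  qed (use s1 s0 tau in \<open>auto intro!: tendsto_intros al be simp: eta_def kap\<close>)
  have p_tQ: "((\<lambda>m. t m * Q m) \<longlongrightarrow> 0) sequentially"
  proof (rule piece0[where C="Dd" and e="\<lambda>m. eta + kap - be m + al m" and ?e0.0="eta + kap - g2 + g1"])
    show "eventually (\<lambda>m. t m * Q m = Dd * real m powr (eta + kap - be m + al m)) sequentially"
      using rep proof eventually_elim
      case (elim m)
      then show ?case by (simp add: Q_def lamb_def t_def rr_def power_mult_distrib powr_power powr_add powr_diff powr_minus divide_inverse mult_ac)
    qed
  qed (use s1 s0 tau in \<open>auto intro!: tendsto_intros al be simp: eta_def kap\<close>)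
  have p_eQQ: "((\<lambda>m. eps m * (Q m)^2) \<longlongrightarrow> 0) sequentially"
  proof (rule piece0[where C="Dd^2" and e="\<lambda>m. 2 * kap - be m" and ?e0.0="2 * kap - g2"])
    show "eventually (\<lambda>m. eps m * (Q m)^2 = Dd^2 * real m powr (2 * kap - be m)) sequentially"
      using rep proof eventually_elim
      case (elim m)
      then show ?case by (simp add: Q_def lamb_def t_def rr_def power_mult_distrib powr_power powr_add powr_diff powr_minus divide_inverse mult_ac)
    qed
  qed (use s1 s0 tau in \<open>auto intro!: tendsto_intros al be simp: eta_def kap\<close>)
  have p_eQQl: "((\<lambda>m. eps m * (Q m)^2 * lamb m) \<longlongrightarrow> 0) sequentially"
  proof (rule piece0[where C="Dd^2" and e="\<lambda>m. 2 * kap - be m + eta" and ?e0.0="2 * kap - g2 + eta"])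
    show "eventually (\<lambda>m. eps m * (Q m)^2 * lamb m = Dd^2 * real m powr (2 * kap - be m + eta)) sequentially"
      using rep proof eventually_elim
      case (elim m)
      then show ?case by (simp add: Q_def lamb_def t_def rr_def power_mult_distrib powr_power powr_add powr_diff powr_minus divide_inverse mult_ac)
    qed
  qed (use s1 s0 tau in \<open>auto intro!: tendsto_intros al be simp: eta_def kap\<close>)
  have p_mQ3: "((\<lambda>m. real m * nu m * eps m * (Q m)^3) \<longlongrightarrow> 0) sequentially"
  proof (rule piece0[where C="Dd^3" and e="\<lambda>m. 1 - al m - be m + 3 * kap" and ?e0.0="1 - g1 - g2 + 3 * kap"])
    show "eventually (\<lambda>m. real m * nu m * eps m * (Q m)^3 = Dd^3 * real m powr (1 - al m - be m + 3 * kap)) sequentially"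
      using rep proof eventually_elim
      case (elim m)
      then show ?case by (simp add: Q_def lamb_def t_def rr_def power_mult_distrib powr_power powr_add powr_diff powr_minus divide_inverse mult_ac)
    qed
  qed (use s1 s0 tau in \<open>auto intro!: tendsto_intros al be simp: eta_def kap\<close>)
  have p_mQ3l: "((\<lambda>m. real m * nu m * eps m * (Q m)^3 * lamb m) \<longlongrightarrow> 0) sequentially"
  proof (rule piece0[where C="Dd^3" and e="\<lambda>m. 1 - al m - be m + 3 * kap + eta" and ?e0.0="1 - g1 - g2 + 3 * kap + eta"])
    show "eventually (\<lambda>m. real m * nu m * eps m * (Q m)^3 * lamb m = Dd^3 * real m powr (1 - al m - be m + 3 * kap + eta)) sequentially"
      using rep proof eventually_elim
      case (elim m)
      then show ?case by (simp add: Q_def lamb_def t_def rr_def power_mult_distrib powr_power powr_add powr_diff powr_minus divide_inverse mult_ac)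
    qed
  qed (use s1 s0 tau in \<open>auto intro!: tendsto_intros al be simp: eta_def kap\<close>)
  have p_Ql: "((\<lambda>m. Q m / lamb m) \<longlongrightarrow> 0) sequentially"
  proof (rule piece0[where C="Dd" and e="\<lambda>m. kap - eta" and ?e0.0="kap - eta"])
    show "eventually (\<lambda>m. Q m / lamb m = Dd * real m powr (kap - eta)) sequentially"
      using rep proof eventually_elim
      case (elim m)
      then show ?case by (simp add: Q_def lamb_def t_def rr_def power_mult_distrib powr_power powr_add powr_diff powr_minus divide_inverse mult_ac)
    qed
  qed (use s1 s0 tau in \<open>auto intro!: tendsto_intros al be simp: eta_def kap\<close>)
  have p_irr: "((\<lambda>m. 1 / rr m) \<longlongrightarrow> 0) sequentially"
  proof (rule piece0[where C="1" and e="\<lambda>m. al m - be m" and ?e0.0="g1 - g2"])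
    show "eventually (\<lambda>m. 1 / rr m = 1 * real m powr (al m - be m)) sequentially"
      using rep proof eventually_elim
      case (elim m)
      then show ?case by (simp add: Q_def lamb_def t_def rr_def power_mult_distrib powr_power powr_add powr_diff powr_minus divide_inverse mult_ac)
    qed
  qed (use s1 s0 tau in \<open>auto intro!: tendsto_intros al be simp: eta_def kap\<close>)
  have p_mQ2: "((\<lambda>m. real m * nu m * eps m * (Q m)^2) \<longlongrightarrow> 0) sequentially"
  proof (rule piece0[where C="Dd^2" and e="\<lambda>m. 1 - al m - be m + 2 * kap" and ?e0.0="1 - g1 - g2 + 2 * kap"])
    show "eventually (\<lambda>m. real m * nu m * eps m * (Q m)^2 = Dd^2 * real m powr (1 - al m - be m + 2 * kap)) sequentially"
      using rep proof eventually_elim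
      case (elim m)
      then show ?case by (simp add: Q_def lamb_def t_def rr_def power_mult_distrib powr_power powr_add powr_diff powr_minus divide_inverse mult_ac)
    qed
  qed (use s1 s0 tau in \<open>auto intro!: tendsto_intros al be simp: eta_def kap\<close>)
  have p_psi1: "((\<lambda>m. real m * nu m * eps m * real m powr (3 * kap + 3 * eta + tau)) \<longlongrightarrow> 0) sequentially"
  proof (rule piece0[where C="1" and e="\<lambda>m. 1 - al m - be m + (3 * kap + 3 * eta + tau)" and ?e0.0="1 - g1 - g2 + (3 * kap + 3 * eta + tau)"])
    show "eventually (\<lambda>m. real m * nu m * eps m * real m powr (3 * kap + 3 * eta + tau) = 1 * real m powr (1 - al m - be m + (3 * kap + 3 * eta + tau))) sequentially"
      using rep proof eventually_elim
      case (elim m)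
      then show ?case by (simp add: Q_def lamb_def t_def rr_def power_mult_distrib powr_power powr_add powr_diff powr_minus divide_inverse mult_ac)
    qed
  qed (use s1 s0 tau in \<open>auto intro!: tendsto_intros al be simp: eta_def kap\<close>)
  have p_psi2: "((\<lambda>m. eps m * real m powr (2 * kap + 2 * eta + tau)) \<longlongrightarrow> 0) sequentially"
  proof (rule piece0[where C="1" and e="\<lambda>m. - be m + (2 * kap + 2 * eta + tau)" and ?e0.0="- g2 + (2 * kap + 2 * eta + tau)"])
    show "eventually (\<lambda>m. eps m * real m powr (2 * kap + 2 * eta + tau) = 1 * real m powr (- be m + (2 * kap + 2 * eta + tau))) sequentially"
      using rep proof eventually_elim
      case (elim m)
      then show ?case by (simp add: Q_def lamb_def t_def rr_def power_mult_distrib powr_power powr_add powr_diff powr_minus divide_inverse mult_ac)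
    qed
  qed (use s1 s0 tau in \<open>auto intro!: tendsto_intros al be simp: eta_def kap\<close>)

  have Dn_eq: "Dn = (\<lambda>m. 4*c*CL*K0*Xs*(t m*Q m) + c*CL*Xs^2*(eps m*(Q m)^2) + 4*K0*c*CL*Xs^2*(eps m*(Q m)^2*lamb m)
      + 16*CL^2*Xs^2*(real m * nu m * eps m * (Q m)^3) + 64*K0*CL^2*Xs^2*(real m * nu m * eps m * (Q m)^3 * lamb m))"
    unfolding Dn_def F_def Wb_def by (rule ext) (simp add: algebra_simps power2_eq_square power3_eq_cube)
  have p_Dn: "(Dn \<longlongrightarrow> 0) sequentially"
  proof -
    have "((\<lambda>m. 4*c*CL*K0*Xs*(t m*Q m) + c*CL*Xs^2*(eps m*(Q m)^2) + 4*K0*c*CL*Xs^2*(eps m*(Q m)^2*lamb m)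
      + 16*CL^2*Xs^2*(real m * nu m * eps m * (Q m)^3) + 64*K0*CL^2*Xs^2*(real m * nu m * eps m * (Q m)^3 * lamb m))
      \<longlongrightarrow> 4*c*CL*K0*Xs*0 + c*CL*Xs^2*0 + 4*K0*c*CL*Xs^2*0 + 16*CL^2*Xs^2*0 + 64*K0*CL^2*Xs^2*0) sequentially"
      by (intro tendsto_intros p_tQ p_eQQ p_eQQl p_mQ3 p_mQ3l)
    then show ?thesis unfolding Dn_eq by simp
  qed
  have ev1: "eventually (\<lambda>m. m \<ge> (1::nat)) sequentially" by (rule eventually_ge_at_top)
  have posQ: "eventually (\<lambda>m. 0 < Q m \<and> 0 < lamb m) sequentially"
    using ev1 by eventually_elim (use Dd in \<open>auto simp: Q_def lamb_def\<close>)
  have z8: "0 < zn / sqrt 8" using zn by simp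
  have QlD: "((\<lambda>m. Q m / lamb m + Dn m) \<longlongrightarrow> 0) sequentially"
    using tendsto_add[OF p_Ql p_Dn] by simp
  have e_rr: "eventually (\<lambda>m. 1 \<le> rr m) sequentially"
  proof -
    have "eventually (\<lambda>m. 1 / rr m < 1) sequentially" using order_tendstoD(2)[OF p_irr, of 1] by simp
    then show ?thesis
    proof eventually_elim
      case (elim m)
      have "0 < rr m" unfolding rr_def using nu_pos eps_pos by simp
      then show ?case using elim by (simp add: divide_less_eq)
    qed
  qed
  have e_t: "eventually (\<lambda>m. 2 * K0 * (lamb m / rr m) \<le> 1) sequentially"
  proof -
    have "eventually (\<lambda>m. t m < 1 / (2 * K0 + 1)) sequentially" using order_tendstoD(2)[OF p_t, of "1 / (2 * K0 + 1)"] K0 by simp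
    then show ?thesis
    proof eventually_elim
      case (elim m)
      have t0: "0 \<le> t m" unfolding t_def lamb_def rr_def using nu_pos[of m] eps_pos[of m] by simp
      have "2 * K0 * t m \<le> (2 * K0 + 1) * t m" using t0 by (simp add: mult_right_mono)
      also have "\<dots> \<le> 1" using elim K0 by (simp add: field_simps)
      finally show ?case unfolding t_def by simp
    qed
  qed
  have e_psi: "eventually (\<lambda>m. real m * nu m * eps m * (Q m * (5 + 4 * K0 * lamb m))^3 + eps m * (Q m * (5 + 4 * K0 * lamb m))^2 \<le> real m powr (- tau)) sequentially"
  proof -
    define C where "C = Dd * (5 + 4 * K0)"
    have C0: "0 < C" unfolding C_def using Dd K0 by simp
    have "eventually (\<lambda>m. real m * nu m * eps m * real m powr (3 * kap + 3 * eta + tau) < 1 / (2 * C^3)) sequentially"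
      using order_tendstoD(2)[OF p_psi1, of "1 / (2 * C^3)"] C0 by simp
    moreover have "eventually (\<lambda>m. eps m * real m powr (2 * kap + 2 * eta + tau) < 1 / (2 * C^2)) sequentially"
      using order_tendstoD(2)[OF p_psi2, of "1 / (2 * C^2)"] C0 by simp
    ultimately show ?thesis using ev1
    proof eventually_elim
      case (elim m)
      have m1: "1 \<le> real m" using elim by simp
      have B0: "0 \<le> Q m * (5 + 4 * K0 * lamb m)" unfolding Q_def lamb_def using Dd K0 by simp
      have Bb: "Q m * (5 + 4 * K0 * lamb m) \<le> C * real m powr (kap + eta)"
      proof -
        have l1: "1 \<le> lamb m" unfolding lamb_def using m1 kap0 eta_def ge_one_powr_ge_zero[of "real m" eta] by simp
        have "Q m * (5 + 4 * K0 * lamb m) \<le> Q m * (5 * lamb m + 4 * K0 * lamb m)"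
          unfolding Q_def using l1 Dd by (intro mult_left_mono) auto
        also have "\<dots> = C * real m powr (kap + eta)" unfolding Q_def lamb_def C_def by (simp add: powr_add algebra_simps)
        finally show ?thesis .
      qed
      have mp: "0 < real m powr (- tau)" using m1 by simp
      have A1: "real m * nu m * eps m * (Q m * (5 + 4 * K0 * lamb m))^3 \<le> real m powr (- tau) / 2"
      proof -
        have "real m * nu m * eps m * (Q m * (5 + 4 * K0 * lamb m))^3 \<le> real m * nu m * eps m * (C * real m powr (kap + eta))^3"
          using Bb B0 nu_pos[of m] eps_pos[of m] m1 by (intro mult_left_mono power_mono) auto
        also have "\<dots> = C^3 * (real m * nu m * eps m * real m powr (3 * kap + 3 * eta + tau)) * real m powr (- tau)"
          using m1 by (simp add: power_mult_distrib powr_power powr_add powr_minus algebra_simps)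
        also have "\<dots> \<le> C^3 * (1 / (2 * C^3)) * real m powr (- tau)"
          using elim(1) C0 mp by (intro mult_right_mono mult_left_mono) auto
        also have "\<dots> = real m powr (- tau) / 2" using C0 by simp
        finally show ?thesis .
      qed
      have A2: "eps m * (Q m * (5 + 4 * K0 * lamb m))^2 \<le> real m powr (- tau) / 2"
      proof -
        have "eps m * (Q m * (5 + 4 * K0 * lamb m))^2 \<le> eps m * (C * real m powr (kap + eta))^2"
          using Bb B0 eps_pos[of m] by (intro mult_left_mono power_mono) auto
        also have "\<dots> = C^2 * (eps m * real m powr (2 * kap + 2 * eta + tau)) * real m powr (- tau)"
          using m1 by (simp add: power_mult_distrib powr_power powr_add powr_minus algebra_simps)
        also have "\<dots> \<le> C^2 * (1 / (2 * C^2)) * real m powr (- tau)"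
          using elim(2) C0 mp by (intro mult_right_mono mult_left_mono) auto
        also have "\<dots> = real m powr (- tau) / 2" using C0 by simp
        finally show ?thesis .
      qed
      show ?case using A1 A2 by linarith
    qed
  qed
  have e_f0: "eventually (\<lambda>m. real m * nu m * eps m * CL * Xs * (Q m)^2 \<le> 1) sequentially"
  proof -
    have "eventually (\<lambda>m. real m * nu m * eps m * (Q m)^2 < 1 / (CL * Xs + 1)) sequentially"
      using order_tendstoD(2)[OF p_mQ2, of "1 / (CL * Xs + 1)"] CL Xs by (simp add: add_nonneg_pos)
    then show ?thesis
    proof eventually_elim
      case (elim m)
      have x0: "0 \<le> real m * nu m * eps m * (Q m)^2" using nu_pos[of m] eps_pos[of m] by simp
      have "real m * nu m * eps m * CL * Xs * (Q m)^2 = (CL * Xs) * (real m * nu m * eps m * (Q m)^2)" by (simp add: mult_ac)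
      also have "\<dots> \<le> (CL * Xs + 1) * (real m * nu m * eps m * (Q m)^2)" using x0 by (intro mult_right_mono) auto
      also have "\<dots> \<le> 1"
      proof -
        have pos: "0 < CL * Xs + 1" using CL Xs by (simp add: add_nonneg_pos)
        have "real m * nu m * eps m * (Q m)^2 * (CL * Xs + 1) < 1"
          using elim pos_less_divide_eq[OF pos] by blast
        then show ?thesis by (simp add: mult.commute)
      qed
      finally show ?case .
    qed
  qed
  have e_pos: "eventually (\<lambda>m. 2 * (Q m + lamb m * Dn m) < lamb m * zn / sqrt 8) sequentially"
  proof -
    have "eventually (\<lambda>m. Q m / lamb m + Dn m < zn / sqrt 8 / 2) sequentially"
      using order_tendstoD(2)[OF QlD, of "zn / sqrt 8 / 2"] z8 by simp
    then show ?thesis using posQ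
    proof eventually_elim
      case (elim m)
      then have "2 * (Q m / lamb m + Dn m) * lamb m < zn / sqrt 8 * lamb m" by (intro mult_strict_right_mono) auto
      then show ?case using elim by (simp add: algebra_simps)
    qed
  qed
  show "eventually (\<lambda>m. 1 \<le> rr m \<and> 2 * K0 * (lamb m / rr m) \<le> 1
       \<and> real m * nu m * eps m * (Q m * (5 + 4 * K0 * lamb m))^3 + eps m * (Q m * (5 + 4 * K0 * lamb m))^2 \<le> real m powr (- tau)
       \<and> real m * nu m * eps m * CL * Xs * (Q m)^2 \<le> 1
       \<and> 2 * (Q m + lamb m * Dn m) < lamb m * zn / sqrt 8
       \<and> 0 < Q m \<and> 0 < lamb m) sequentially"
    using e_rr e_t e_psi e_f0 e_pos posQ by eventually_elim auto
  show "\<And>r. eventually (\<lambda>m. r < lamb m * (zn / sqrt 8 - Dn m) / Q m) sequentially"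
  proof -
    fix r :: real
    have "eventually (\<lambda>m. Dn m < zn / sqrt 8 / 2) sequentially"
      using order_tendstoD(2)[OF p_Dn, of "zn / sqrt 8 / 2"] z8 by simp
    moreover have "eventually (\<lambda>m. Q m / lamb m < (zn / sqrt 8 / 2) / (\<bar>r\<bar> + 1)) sequentially"
    proof -
      have "0 < (zn / sqrt 8 / 2) / (\<bar>r\<bar> + 1)" using z8 zn by (intro divide_pos_pos) auto
      then show ?thesis using order_tendstoD(2)[OF p_Ql, of "(zn / sqrt 8 / 2) / (\<bar>r\<bar> + 1)"] by blast
    qed
    ultimately show "eventually (\<lambda>m. r < lamb m * (zn / sqrt 8 - Dn m) / Q m) sequentially"
      using posQ
    proof eventually_elim
      case (elim m)
      have ql: "0 < Q m / lamb m" using elim by simp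
      have R0: "0 < \<bar>r\<bar> + 1" by simp
      have "Q m / lamb m * (\<bar>r\<bar> + 1) < zn / sqrt 8 / 2" using elim(2) pos_less_divide_eq[OF R0] by blast
      then have "(\<bar>r\<bar> + 1) * (Q m / lamb m) < zn / sqrt 8 / 2" by (simp only: mult.commute)
      then have "\<bar>r\<bar> + 1 < (zn / sqrt 8 / 2) / (Q m / lamb m)"
        by (simp only: pos_less_divide_eq[OF ql])
      also have "\<dots> \<le> (zn / sqrt 8 - Dn m) / (Q m / lamb m)"
        using elim(1) ql by (intro divide_right_mono) auto
      also have "\<dots> = lamb m * (zn / sqrt 8 - Dn m) / Q m" using elim by (simp add: field_simps)
      finally show ?case by linarith
    qed
  qed
  show "((\<lambda>m. (Q m + lamb m * Dn m) / (lamb m * zn / sqrt 8 - (Q m + lamb m * Dn m))) \<longlongrightarrow> 0) sequentially"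
  proof -
    have "((\<lambda>m. (Q m / lamb m + Dn m) / (zn / sqrt 8 - (Q m / lamb m + Dn m))) \<longlongrightarrow> 0 / (zn / sqrt 8 - 0)) sequentially"
      using z8 by (intro tendsto_intros QlD) auto
    moreover have "eventually (\<lambda>m. (Q m / lamb m + Dn m) / (zn / sqrt 8 - (Q m / lamb m + Dn m)) =
        (Q m + lamb m * Dn m) / (lamb m * zn / sqrt 8 - (Q m + lamb m * Dn m))) sequentially"
      using posQ
    proof eventually_elim
      case (elim m)
      have "(Q m / lamb m + Dn m) = (Q m + lamb m * Dn m) / lamb m" using elim by (simp add: field_simps)
      moreover have "zn / sqrt 8 - (Q m + lamb m * Dn m) / lamb m = (lamb m * zn / sqrt 8 - (Q m + lamb m * Dn m)) / lamb m"
        using elim by (simp add: field_simps)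
      ultimately show ?case using elim by simp
    qed
    ultimately show ?thesis by (simp add: tendsto_cong)
  qed
qed

context prob_space begin

lemma gauss_moment:
  assumes D: "distributed M lborel X (\<lambda>u. ennreal (std_normal_density u))"
  shows "integrable M (\<lambda>\<omega>. X \<omega> ^ (2*k))" "expectation (\<lambda>\<omega>. X \<omega> ^ (2*k)) = fact (2*k) / (2^k * fact k)"
proof -
  have i: "integrable lborel (\<lambda>x. std_normal_density x * x ^ (2*k))"
    using std_normal_moment_even[of k] by (rule integrable.intros)
  show "integrable M (\<lambda>\<omega>. X \<omega> ^ (2*k))"
    using distributed_integrable[OF D, of "\<lambda>x. x ^ (2*k)"] i by simp
  have "expectation (\<lambda>\<omega>. X \<omega> ^ (2*k)) = (\<integral>x. std_normal_density x * x ^ (2*k) \<partial>lborel)"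
    using distributed_integral[OF D, of "\<lambda>x. x ^ (2*k)"] by simp
  then show "expectation (\<lambda>\<omega>. X \<omega> ^ (2*k)) = fact (2*k) / (2^k * fact k)"
    using integral_std_normal_moment_even[of k] by simp
qed

lemma gauss_meas: assumes D: "distributed M lborel X (\<lambda>u. ennreal (std_normal_density u))"
  shows "X \<in> borel_measurable M"
  using distributed_measurable[OF D] by simp

lemma gauss_tail:
  assumes D: "distributed M lborel X (\<lambda>u. ennreal (std_normal_density u))" and b: "0 < b"
  shows "prob {\<omega>\<in>space M. b < \<bar>X \<omega>\<bar>} \<le> (fact (2*k) / (2^k * fact k)) / b^(2*k)"
proof -
  note Xm = gauss_meas[OF D]
  have "prob {\<omega>\<in>space M. b < \<bar>X \<omega>\<bar>} \<le> prob {\<omega>\<in>space M. b^(2*k) \<le> X \<omega> ^ (2*k)}"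
  proof (rule finite_measure_mono)
    show "{\<omega>\<in>space M. b < \<bar>X \<omega>\<bar>} \<subseteq> {\<omega>\<in>space M. b^(2*k) \<le> X \<omega> ^ (2*k)}"
    proof safe
      fix \<omega> assume "b < \<bar>X \<omega>\<bar>"
      then have "b^(2*k) \<le> \<bar>X \<omega>\<bar>^(2*k)" using b by (intro power_mono) auto
      then show "b^(2*k) \<le> X \<omega> ^ (2*k)" by (simp add: power_even_abs)
    qed
    show "{\<omega>\<in>space M. b^(2*k) \<le> X \<omega> ^ (2*k)} \<in> events" using Xm by measurable
  qed
  also have "\<dots> \<le> expectation (\<lambda>\<omega>. X \<omega> ^ (2*k)) / b^(2*k)"
    by (rule integral_Markov_inequality_measure[OF gauss_moment(1)[OF D] sets.top])
       (use b in \<open>auto simp: zero_le_even_power\<close>)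
  finally show ?thesis using gauss_moment(2)[OF D] by simp
qed

lemma gauss_zero:
  assumes D: "distributed M lborel X (\<lambda>u. ennreal (std_normal_density u))"
  shows "prob {\<omega>\<in>space M. X \<omega> = 0} = 0"
proof -
  have "emeasure M (X -` {0} \<inter> space M) = (\<integral>\<^sup>+x. ennreal (std_normal_density x) * indicator {0} x \<partial>lborel)"
    using distributed_emeasure[OF D, of "{0}"] by simp
  also have "\<dots> = 0"
  proof -
    have s: "{0::real} \<in> sets lborel" by simp
    show ?thesis using nn_integral_indicator_singleton[OF s, of "\<lambda>x. ennreal (std_normal_density x)"] by simp
  qed
  finally have "emeasure M (X -` {0} \<inter> space M) = 0" .
  moreover have "X -` {0} \<inter> space M = {\<omega>\<in>space M. X \<omega> = 0}" by auto
  ultimately show ?thesis by (simp add: measure_def)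
qed

lemma min_sq_expect:
  assumes D: "distributed M lborel X (\<lambda>u. ennreal (std_normal_density u))"
  shows "1/4 \<le> expectation (\<lambda>\<omega>. min ((X \<omega>)^2) 1)" "integrable M (\<lambda>\<omega>. min ((X \<omega>)^2) 1)"
proof -
  note Xm[measurable] = gauss_meas[OF D]
  show im: "integrable M (\<lambda>\<omega>. min ((X \<omega>)^2) 1)"
    by (rule integrable_const_bound[where B=1]) auto
  have i2: "integrable M (\<lambda>\<omega>. X \<omega> ^ (2*1))" "integrable M (\<lambda>\<omega>. X \<omega> ^ (2*2))"
    using gauss_moment(1)[OF D] by blast+
  have e2: "expectation (\<lambda>\<omega>. X \<omega> ^ (2*1)) = 1" "expectation (\<lambda>\<omega>. X \<omega> ^ (2*2)) = 3"
    using gauss_moment(2)[OF D, of 1] gauss_moment(2)[OF D, of 2] by (simp_all add: fact_numeral)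
  have "expectation (\<lambda>\<omega>. X \<omega> ^ (2*1) - X \<omega> ^ (2*2) / 4) \<le> expectation (\<lambda>\<omega>. min ((X \<omega>)^2) 1)"
  proof (rule integral_mono)
    show "integrable M (\<lambda>\<omega>. X \<omega> ^ (2*1) - X \<omega> ^ (2*2) / 4)" using i2 by auto
    show "integrable M (\<lambda>\<omega>. min ((X \<omega>)^2) 1)" by (rule im)
    fix \<omega>
    have "X \<omega> ^ 2 - X \<omega> ^ 4 / 4 \<le> min ((X \<omega>)^2) 1"
    proof -
      have a: "X \<omega> ^ 2 - X \<omega> ^ 4 / 4 \<le> X \<omega> ^ 2" by (simp add: zero_le_even_power)
      have "0 \<le> (X \<omega> ^ 2 - 2)^2" by simp
      then have b: "X \<omega> ^ 2 - X \<omega> ^ 4 / 4 \<le> 1" by (simp add: power2_eq_square power4_eq_xxxx algebra_simps)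
      show ?thesis using a b by simp
    qed
    then show "X \<omega> ^ (2*1) - X \<omega> ^ (2*2) / 4 \<le> min ((X \<omega>)^2) 1" by simp
  qed
  moreover have "expectation (\<lambda>\<omega>. X \<omega> ^ (2*1) - X \<omega> ^ (2*2) / 4) = 1 - 3 / 4"
    using i2 e2 by (simp add: Bochner_Integration.integral_diff)
  ultimately show "1/4 \<le> expectation (\<lambda>\<omega>. min ((X \<omega>)^2) 1)" by simp
qed

lemma hoeff_app:
  fixes I :: "'i set" and Z :: "'i \<Rightarrow> 'a \<Rightarrow> real"
  assumes fin: "finite I" and ne: "I \<noteq> {}" and ind: "indep_vars (\<lambda>_. borel) Z I"
    and D: "\<And>i. i \<in> I \<Longrightarrow> distributed M lborel (Z i) (\<lambda>u. ennreal (std_normal_density u))"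
  shows "prob {\<omega>\<in>space M. (\<Sum>i\<in>I. min ((Z i \<omega>)^2) 1) < real (card I) / 8} \<le> exp (- real (card I) / 32)"
proof -
  define Y where "Y i \<omega> = min ((Z i \<omega>)^2) 1" for i \<omega>
  have indY: "indep_vars (\<lambda>_. borel) Y I"
    unfolding Y_def by (rule indep_vars_compose2[OF ind]) auto
  interpret H: Hoeffding_ineq M I Y "\<lambda>_. 0" "\<lambda>_. 1" "\<Sum>i\<in>I. expectation (Y i)"
    by unfold_locales (auto simp: fin indY Y_def)
  have mu: "real (card I) / 4 \<le> (\<Sum>i\<in>I. expectation (Y i))"
  proof -
    have "(\<Sum>i\<in>I. (1/4::real)) \<le> (\<Sum>i\<in>I. expectation (Y i))"
      unfolding Y_def using min_sq_expect(1)[OF D] by (intro sum_mono) auto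
    then show ?thesis by simp
  qed
  have c0: "0 < real (card I)" using fin ne by (simp add: card_gt_0_iff)
  have "prob {\<omega>\<in>space M. (\<Sum>i\<in>I. Y i \<omega>) < real (card I) / 8}
      \<le> prob {\<omega>\<in>space M. (\<Sum>i\<in>I. Y i \<omega>) \<le> (\<Sum>i\<in>I. expectation (Y i)) - real (card I) / 8}"
  proof (rule finite_measure_mono)
    show "{\<omega>\<in>space M. (\<Sum>i\<in>I. Y i \<omega>) < real (card I) / 8} \<subseteq> {\<omega>\<in>space M. (\<Sum>i\<in>I. Y i \<omega>) \<le> (\<Sum>i\<in>I. expectation (Y i)) - real (card I) / 8}"
      using mu by auto
    have [measurable]: "Y i \<in> borel_measurable M" if "i \<in> I" for i
      using H.random_variable[OF that] by simp
    show "{\<omega>\<in>space M. (\<Sum>i\<in>I. Y i \<omega>) \<le> (\<Sum>i\<in>I. expectation (Y i)) - real (card I) / 8} \<in> events"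
      by measurable
  qed
  also have "\<dots> \<le> exp (-2 * (real (card I) / 8)^2 / (\<Sum>i\<in>I. (1 - 0)^2))"
    using c0 by (intro H.Hoeffding_ineq_le) auto
  also have "\<dots> = exp (- real (card I) / 32)"
    using c0 by (simp add: power2_eq_square field_simps)
  finally show ?thesis unfolding Y_def .
qed

end

context traj begin

lemma per_m:
  fixes Q lamb K0 c gamma' beta Dn :: real
  assumes m: "m > 0" and yc: "\<And>i. i < n \<Longrightarrow> \<bar>y i\<bar> \<le> c"
    and zn: "norm zz > 0"
    and Q: "\<And>k. k < m \<Longrightarrow> \<bar>a 0 k\<bar> \<le> Q \<and> norm (w 0 k) \<le> Q"
    and Sa: "real m / 8 \<le> (\<Sum>k<m. (a 0 k)^2)"
    and Sw: "0 < theta_w_norm m (w 0)"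
    and rr1: "1 \<le> nu / eps" and tK: "2 * K0 * (lamb / (nu / eps)) \<le> 1"
    and psi_c: "real m * nu * eps * (Q * (5 + 4*K0*lamb))^3 + eps * (Q * (5 + 4*K0*lamb))^2 \<le> real m powr (- (- gamma' / beta))"
    and f0: "real m * nu * eps * CL * Xs * Q^2 \<le> 1"
    and pos: "2 * (Q + lamb * Dn) < lamb * norm zz / sqrt 8"
    and lamb: "0 < lamb"
    and K0: "K0 = sqrt (real n) * (1 + c) * CL * Xs"
    and Dn: "Dn = Xs * (c * (CL * ((lamb / (nu / eps)) * K0 * 4 * Q) + Q * (CL * (eps * (Q * (1 + 4 * K0 * lamb))) * Xs))
                 + (real m * nu * (4*Q) * CL * (eps * (Q * (1 + 4 * K0 * lamb))) * Xs) * (4 * Q) * CL)"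
  shows "\<exists>t. 0 \<le> t \<and> ereal t \<le> T_eff m nu eps gamma' beta a w
     \<and> lamb * (norm zz / sqrt 8 - Dn) / Q \<le> theta_w_norm m (\<lambda>k. w t k - w 0 k) / theta_w_norm m (w 0)
     \<and> 1 - (Q + lamb * Dn) / (lamb * norm zz / sqrt 8 - (Q + lamb * Dn)) \<le> theta_wz_norm m ((1 / norm zz) *\<^sub>R zz) (w t) / theta_w_norm m (w t)"
proof -
  have Q0: "0 \<le> Q" using Q[OF m] by (meson abs_ge_zero order_trans)
  have c0: "0 \<le> c" using yc[OF n_pos] by (meson abs_ge_zero order_trans)
  have fi0: "\<bar>net_out m nu eps \<sigma> (a 0) (w 0) (x i)\<bar> \<le> 1" if i: "i < n" for i
  proof -
    have "\<bar>net_out m nu eps \<sigma> (a 0) (w 0) (x i)\<bar> \<le> (\<Sum>k<m. nu * \<bar>a 0 k\<bar> * CL * (eps * norm (w 0 k)) * norm (x i))"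
      by (rule fo_bound)
    also have "\<dots> \<le> (\<Sum>k<m. nu * Q * CL * (eps * Q) * Xs)"
      using Q x_le_Xs[OF i] nu_pos eps_pos CL_ge1 Q0
      by (intro sum_mono mult_mono mult_left_mono) auto
    also have "\<dots> = real m * nu * eps * CL * Xs * Q^2" by (simp add: power2_eq_square mult_ac)
    finally show ?thesis using f0 by linarith
  qed
  have "Lf 0 \<le> (\<Sum>i<n. (1 + c)^2)" unfolding Lf_def
  proof (intro sum_mono)
    fix i assume "i \<in> {..<n}"
    then have "\<bar>e 0 i\<bar> \<le> 1 + c" unfolding e_def using fi0 yc by (smt (verit) lessThan_iff)
    then show "(e 0 i)^2 \<le> (1 + c)^2" by (metis abs_ge_zero power_mono power2_abs)
  qed
  then have "Lf 0 \<le> real n * (1 + c)^2" by simp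
  then have "EE \<le> sqrt (real n * (1 + c)^2)" unfolding EE_def by simp
  also have "\<dots> = sqrt (real n) * (1 + c)" using c0 by (simp add: real_sqrt_mult)
  finally have "EE \<le> sqrt (real n) * (1 + c)" .
  then have KK0: "KK \<le> K0" unfolding KK_def K0 using CL_ge1 Xs_nonneg
    by (intro mult_right_mono) auto
  have rr: "rr = nu / eps" unfolding rr_def ..
  define t where "t = lamb / rr"
  have Dn': "Dn = Xs * (c * (CL * (t * K0 * 4 * Q) + Q * (CL * (eps * (Q * (1 + 4 * K0 * lamb))) * Xs))
      + (real m * nu * (4*Q) * CL * (eps * (Q * (1 + 4 * K0 * lamb))) * Xs) * (4 * Q) * CL)"
    unfolding Dn t_def rr ..
  have r1: "1 \<le> rr" using rr1 rr by simp
  have tK': "2 * K0 * (lamb / rr) \<le> 1" using tK rr by simp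
  define Wb where "Wb = Q * (1 + 4 * K0 * lamb)"
  define F where "F = real m * nu * (4*Q) * CL * (eps * Wb) * Xs"
  have Dn'': "Dn = Xs * (c * (CL * (t * K0 * 4 * Q) + Q * (CL * (eps * Wb) * Xs)) + F * (4 * Q) * CL)"
    unfolding Dn' F_def Wb_def ..
  note md = main_det[where Q=Q and lamb=lamb and ?K0.0=K0 and c=c and gamma'=gamma' and beta=beta and t=t
     and Wb=Wb and F=F and Dn=Dn]
  have T1: "ereal t \<le> T_eff m nu eps gamma' beta a w"
    by (rule md(1)) (use m yc Q r1 lamb KK0 tK' psi_c t_def Wb_def F_def Dn'' in auto)
  have C1: "lamb * norm zz * L2_set (a 0) {..<m} - sqrt m * (lamb * Dn) \<le> theta_w_norm m (\<lambda>k. w t k - w 0 k)"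
    by (rule md(2)) (use m yc Q r1 lamb KK0 tK' psi_c t_def Wb_def F_def Dn'' in auto)
  have C2: "1 - (sqrt m * Q + sqrt m * (lamb*Dn)) / (lamb * norm zz * L2_set (a 0) {..<m} - (sqrt m * Q + sqrt m*(lamb*Dn)))
          \<le> theta_wz_norm m ((1/norm zz) *\<^sub>R zz) (w t) / theta_w_norm m (w t)"
    if "norm zz > 0" "sqrt m * Q + sqrt m * (lamb * Dn) < lamb * norm zz * L2_set (a 0) {..<m} - (sqrt m * Q + sqrt m * (lamb*Dn))"
    by (rule md(3)) (use that m yc Q r1 lamb KK0 tK' psi_c t_def Wb_def F_def Dn'' in auto)
  have t0: "0 \<le> t" unfolding t_def using lamb rr_pos by simp
  have sm: "0 < sqrt (real m)" using m by simp
  have Sa': "sqrt (real m) / sqrt 8 \<le> L2_set (a 0) {..<m}"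
  proof -
    have "sqrt (real m / 8) \<le> sqrt (\<Sum>k<m. (a 0 k)^2)" using Sa by simp
    then show ?thesis unfolding L2_set_def by (simp add: real_sqrt_divide)
  qed
  have SwQ: "theta_w_norm m (w 0) \<le> sqrt (real m) * Q"
  proof -
    have "L2_set (\<lambda>k. norm (w 0 k)) {..<m} \<le> L2_set (\<lambda>k. Q) {..<m}" using Q by (intro L2_set_mono) auto
    then show ?thesis using Q0 by (simp add: tw_L2 L2_set_constant)
  qed
  have Dz: "Dn < norm zz / sqrt 8"
  proof -
    have Lp: "0 < lamb * norm zz / sqrt 8" using lamb zn by simp
    have gen: "X < L" if "2 * (Q + X) < L" "0 < L" for X L :: real using that Q0 by (simp add: algebra_simps)
    have "lamb * Dn < lamb * norm zz / sqrt 8" using gen[OF pos Lp] .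
    then have "lamb * Dn < lamb * (norm zz / sqrt 8)" by simp
    then show ?thesis using lamb mult_less_cancel_left_pos by blast
  qed
  have Qpos: "0 < Q"
  proof -
    have "0 < theta_w_norm m (w 0)" by (rule Sw)
    with SwQ have "0 < sqrt (real m) * Q" by linarith
    then show ?thesis using sm by (simp add: zero_less_mult_iff)
  qed
  have R1: "lamb * (norm zz / sqrt 8 - Dn) / Q \<le> theta_w_norm m (\<lambda>k. w t k - w 0 k) / theta_w_norm m (w 0)"
  proof -
    have num: "sqrt (real m) * (lamb * (norm zz / sqrt 8 - Dn)) \<le> lamb * norm zz * L2_set (a 0) {..<m} - sqrt (real m) * (lamb * Dn)"
    proof -
      have "lamb * norm zz * (sqrt (real m) / sqrt 8) \<le> lamb * norm zz * L2_set (a 0) {..<m}"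
        using Sa' lamb zn by (intro mult_left_mono) auto
      then show ?thesis by (simp add: algebra_simps)
    qed
    have nn: "0 \<le> sqrt (real m) * (lamb * (norm zz / sqrt 8 - Dn))" using Dz lamb by simp
    have "lamb * (norm zz / sqrt 8 - Dn) / Q = sqrt (real m) * (lamb * (norm zz / sqrt 8 - Dn)) / (sqrt (real m) * Q)"
      using sm by simp
    also have "\<dots> \<le> sqrt (real m) * (lamb * (norm zz / sqrt 8 - Dn)) / theta_w_norm m (w 0)"
      using nn Sw SwQ by (intro divide_left_mono) auto
    also have "\<dots> \<le> theta_w_norm m (\<lambda>k. w t k - w 0 k) / theta_w_norm m (w 0)"
      using num C1 Sw by (intro divide_right_mono) auto
    finally show ?thesis .
  qed
  have R2: "1 - (Q + lamb * Dn) / (lamb * norm zz / sqrt 8 - (Q + lamb * Dn)) \<le> theta_wz_norm m ((1 / norm zz) *\<^sub>R zz) (w t) / theta_w_norm m (w t)"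
  proof -
    let ?S = "sqrt (real m) * Q + sqrt (real m) * (lamb * Dn)"
    let ?L = "lamb * norm zz * L2_set (a 0) {..<m}"
    have Lge: "sqrt (real m) * (lamb * norm zz / sqrt 8) \<le> ?L"
    proof -
      have "lamb * norm zz * (sqrt (real m) / sqrt 8) \<le> ?L"
        using Sa' lamb zn by (intro mult_left_mono) auto
      then show ?thesis by (simp add: algebra_simps)
    qed
    have S_eq: "?S = sqrt (real m) * (Q + lamb * Dn)" by (simp add: algebra_simps)
    have K00: "0 \<le> K0" unfolding K0 using c0 CL_ge1 Xs_nonneg by simp
    have Dn0: "0 \<le> Dn" unfolding Dn using Xs_nonneg c0 CL_ge1 Q0 K00 lamb nu_pos eps_pos
      by (intro add_nonneg_nonneg mult_nonneg_nonneg) auto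
    have Sn: "0 \<le> Q + lamb * Dn" using Q0 Dn0 lamb by simp
    have dpos: "0 < lamb * norm zz / sqrt 8 - (Q + lamb * Dn)" using pos Sn by (simp add: algebra_simps)
    have posS: "?S < ?L - ?S"
    proof -
      have "2 * ?S = sqrt (real m) * (2 * (Q + lamb * Dn))" using S_eq by simp
      also have "\<dots> < sqrt (real m) * (lamb * norm zz / sqrt 8)" using mult_strict_left_mono[OF pos sm] .
      finally have "2 * ?S < sqrt (real m) * (lamb * norm zz / sqrt 8)" .
      then show ?thesis using Lge unfolding mult_2 by linarith
    qed
    have "?S / (?L - ?S) \<le> (sqrt (real m) * (Q + lamb * Dn)) / (sqrt (real m) * (lamb * norm zz / sqrt 8 - (Q + lamb * Dn)))"
    proof (unfold S_eq, rule divide_left_mono)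
      show "sqrt (real m) * (lamb * norm zz / sqrt 8 - (Q + lamb * Dn)) \<le> ?L - sqrt (real m) * (Q + lamb * Dn)"
        using Lge by (simp add: algebra_simps)
      show "0 \<le> sqrt (real m) * (Q + lamb * Dn)" using Sn by simp
      show "0 < (?L - sqrt (real m) * (Q + lamb * Dn)) * (sqrt (real m) * (lamb * norm zz / sqrt 8 - (Q + lamb * Dn)))"
      proof (rule mult_pos_pos)
        have "0 \<le> ?S" using Sn sm S_eq by simp
        then show "0 < ?L - sqrt (real m) * (Q + lamb * Dn)" using posS S_eq by linarith
        show "0 < sqrt (real m) * (lamb * norm zz / sqrt 8 - (Q + lamb * Dn))" using mult_pos_pos[OF sm dpos] .
      qed
    qed
    also have "\<dots> = (Q + lamb * Dn) / (lamb * norm zz / sqrt 8 - (Q + lamb * Dn))" using sm by simp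
    finally have "1 - (Q + lamb * Dn) / (lamb * norm zz / sqrt 8 - (Q + lamb * Dn)) \<le> 1 - ?S / (?L - ?S)" by simp
    also have "\<dots> \<le> theta_wz_norm m ((1 / norm zz) *\<^sub>R zz) (w t) / theta_w_norm m (w t)"
      using C2[OF zn posS] .
    finally show ?thesis .
  qed
  show ?thesis using t0 T1 R1 R2 by blast
qed

end

lemma prob_part:
  fixes M :: "'w measure" and A :: "nat \<Rightarrow> nat \<Rightarrow> 'w \<Rightarrow> real" and W :: "nat \<Rightarrow> nat \<Rightarrow> 'w \<Rightarrow> real^'d"
    and kap \<delta> :: real
  assumes M_prob: "prob_space M"
    and init_indep: "\<And>m. prob_space.indep_vars M (\<lambda>_. borel)
        (\<lambda>i. case i of Inl k \<Rightarrow> A m k | Inr (k, j) \<Rightarrow> (\<lambda>\<omega>. W m k \<omega> $ j))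
        (Inl ` {..<m} \<union> Inr ` ({..<m} \<times> UNIV))"
    and init_a: "\<And>m k. k < m \<Longrightarrow> distributed M lborel (A m k) (\<lambda>u. ennreal (std_normal_density u))"
    and init_w: "\<And>m k j. k < m \<Longrightarrow> distributed M lborel (\<lambda>\<omega>. W m k \<omega> $ j) (\<lambda>u. ennreal (std_normal_density u))"
    and kap: "0 < kap" and \<delta>: "0 < \<delta>"
  shows "\<exists>E \<in> sets M. measure M E \<ge> 1 - \<delta> \<and> (\<exists>m1 \<ge> 1. \<forall>\<omega>\<in>E. \<forall>m\<ge>m1.
      (\<forall>k<m. \<bar>A m k \<omega>\<bar> \<le> real m powr kap \<and> (\<forall>j. \<bar>W m k \<omega> $ j\<bar> \<le> real m powr kap))
      \<and> real m / 8 \<le> (\<Sum>k<m. min ((A m k \<omega>)^2) 1) \<and> 0 < norm (W m 0 \<omega>))"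
proof -
  interpret P: prob_space M by (rule M_prob)
  define I where "I m = Inl ` {..<m} \<union> Inr ` ({..<m} \<times> (UNIV :: 'd set))" for m :: nat
  define Fm where "Fm m = (\<lambda>i. case i of Inl k \<Rightarrow> A m k | Inr (k, j) \<Rightarrow> (\<lambda>\<omega>. W m k \<omega> $ j))" for m
  have ind: "P.indep_vars (\<lambda>_. borel) (Fm m) (I m)" for m
    unfolding Fm_def I_def using init_indep by blast
  have dist: "distributed M lborel (Fm m i) (\<lambda>u. ennreal (std_normal_density u))" if "i \<in> I m" for m i
    using that init_a init_w unfolding I_def Fm_def by auto
  have finI: "finite (I m)" for m unfolding I_def by simp
  have cardI: "card (I m) = m + m * CARD('d)" for m
  proof -
    have "card (I m) = card (Inl ` {..<m} :: (nat + nat \<times> 'd) set) + card (Inr ` ({..<m} \<times> (UNIV :: 'd set)) :: (nat + nat \<times> 'd) set)"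
      unfolding I_def by (rule card_Un_disjoint) auto
    also have "\<dots> = m + m * CARD('d)" by (simp add: card_image card_cartesian_product)
    finally show ?thesis .
  qed
  obtain p :: nat where p: "3 \<le> 2 * real p * kap"
  proof
    show "3 \<le> 2 * real (nat \<lceil>3 / (2 * kap)\<rceil>) * kap"
    proof -
      define q where "q = real (nat \<lceil>3 / (2 * kap)\<rceil>)"
      have "3 / (2 * kap) \<le> q" unfolding q_def by linarith
      then have "3 \<le> q * (2 * kap)" using kap by (simp add: divide_le_eq)
      then show ?thesis unfolding q_def by (simp add: mult_ac)
    qed
  qed
  define Cp where "Cp = fact (2*p) / (2^p * fact p :: real)"
  have Cp0: "0 \<le> Cp" unfolding Cp_def by simp
  define U1 where "U1 m = (\<Union>i\<in>I m. {\<omega>\<in>space M. real m powr kap < \<bar>Fm m i \<omega>\<bar>})" for m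
  define U2 where "U2 m = {\<omega>\<in>space M. (\<Sum>i\<in>Inl ` {..<m}. min ((Fm m i \<omega>)^2) 1) < real (card (Inl ` {..<m} :: (nat + nat \<times> 'd) set)) / 8}" for m
  define U3 where "U3 m = {\<omega>\<in>space M. W m 0 \<omega> $ (undefined :: 'd) = 0}" for m
  define bad where "bad m = U1 m \<union> U2 m \<union> U3 m" for m
  define bnd where "bnd m = (1 + real CARD('d)) * Cp * inverse (real m ^ 2) + exp (- 1 / 32) ^ m" for m :: nat
  have meas: "Fm m i \<in> borel_measurable M" if "i \<in> I m" for m i
    using P.gauss_meas[OF dist[OF that]] .
  have U1s: "U1 m \<in> P.events" for m
    unfolding U1_def using finI meas by (intro sets.finite_UN) (auto intro!: measurable_sets)
  have U2s: "U2 m \<in> P.events" for m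
  proof -
    have "(\<lambda>\<omega>. \<Sum>i\<in>Inl ` {..<m}. min ((Fm m i \<omega>)^2) 1) \<in> borel_measurable M"
      using meas unfolding I_def by (intro borel_measurable_sum) auto
    then show ?thesis unfolding U2_def by measurable
  qed
  have U3s: "U3 m \<in> P.events" if "m > 0" for m
  proof -
    have "(\<lambda>\<omega>. W m 0 \<omega> $ (undefined :: 'd)) \<in> borel_measurable M" using P.gauss_meas[OF init_w[OF that]] .
    then show ?thesis unfolding U3_def by measurable
  qed
  have bads: "bad m \<in> P.events" if "m > 0" for m unfolding bad_def using U1s U2s U3s[OF that] by auto
  have badp: "P.prob (bad m) \<le> bnd m" if m: "m > 0" for m
  proof -
    have mp: "0 < real m powr kap" using m by simp
    have "P.prob (U1 m) \<le> (\<Sum>i\<in>I m. P.prob {\<omega>\<in>space M. real m powr kap < \<bar>Fm m i \<omega>\<bar>})"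
      unfolding U1_def using finI meas by (intro P.finite_measure_subadditive_finite) (auto intro!: measurable_sets)
    also have "\<dots> \<le> (\<Sum>i\<in>I m. Cp / (real m powr kap)^(2*p))"
      using P.gauss_tail[OF dist mp] unfolding Cp_def by (intro sum_mono) auto
    also have "\<dots> = real (m + m * CARD('d)) * (Cp / (real m powr kap)^(2*p))" using cardI by simp
    also have "\<dots> \<le> real (m + m * CARD('d)) * (Cp / real m ^ 3)"
    proof (intro mult_left_mono divide_left_mono)
      have "real m ^ 3 = real m powr 3" using m by (simp add: powr_realpow)
      also have "\<dots> \<le> real m powr (2 * real p * kap)" using p m by (intro powr_mono) auto
      also have "\<dots> = (real m powr kap)^(2*p)" using m by (simp add: powr_power mult_ac)
      finally show "real m ^ 3 \<le> (real m powr kap)^(2*p)" .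
    qed (use Cp0 m mp in auto)
    also have "\<dots> = (1 + real CARD('d)) * Cp * inverse (real m ^ 2)" using m
      by (simp add: field_simps power3_eq_cube power2_eq_square)
    finally have p1: "P.prob (U1 m) \<le> (1 + real CARD('d)) * Cp * inverse (real m ^ 2)" .
    have p2: "P.prob (U2 m) \<le> exp (- real (card (Inl ` {..<m} :: (nat + nat \<times> 'd) set)) / 32)"
      unfolding U2_def
    proof (rule P.hoeff_app)
      show "P.indep_vars (\<lambda>_. borel) (Fm m) (Inl ` {..<m})"
        using ind by (rule P.indep_vars_subset) (auto simp: I_def)
      show "\<And>i. i \<in> Inl ` {..<m} \<Longrightarrow> distributed M lborel (Fm m i) (\<lambda>u. ennreal (std_normal_density u))"
        using dist by (auto simp: I_def)
    qed (use m in auto)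
    have "card (Inl ` {..<m} :: (nat + nat \<times> 'd) set) = m" by (simp add: card_image)
    then have p2': "P.prob (U2 m) \<le> exp (- 1 / 32) ^ m" using p2 by (simp add: exp_of_nat_mult[symmetric] mult_ac)
    have p3: "P.prob (U3 m) = 0" unfolding U3_def by (rule P.gauss_zero[OF init_w[OF m]])
    have "P.prob (bad m) \<le> P.prob (U1 m \<union> U2 m) + P.prob (U3 m)"
      unfolding bad_def using U1s U2s U3s[OF m] by (intro measure_Un_le) auto
    also have "\<dots> \<le> P.prob (U1 m) + P.prob (U2 m) + P.prob (U3 m)"
      using U1s U2s measure_Un_le[of "U1 m" M "U2 m"] by auto
    finally show ?thesis unfolding bnd_def using p1 p2' p3 by linarith
  qed
  have bnd0: "0 \<le> bnd m" for m unfolding bnd_def using Cp0 by simp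
  have sb: "summable bnd" unfolding bnd_def
    by (intro summable_add summable_mult inverse_power_summable summable_geometric) auto
  obtain N where N: "\<And>n. n \<ge> N \<Longrightarrow> norm (\<Sum>i. bnd (i + n)) < \<delta>" using suminf_exist_split[OF \<delta> sb] by blast
  define m1 where "m1 = max N 1"
  have m1: "1 \<le> m1" "N \<le> m1" unfolding m1_def by auto
  define E where "E = space M - (\<Union>i. bad (i + m1))"
  have badsi: "range (\<lambda>i. bad (i + m1)) \<subseteq> P.events" using bads m1 by auto
  have Es: "E \<in> P.events" unfolding E_def using badsi by auto
  have sbi: "summable (\<lambda>i. bnd (i + m1))" using sb by (rule summable_ignore_initial_segment)
  have smi: "summable (\<lambda>i. P.prob (bad (i + m1)))"
    by (rule summable_comparison_test[OF _ sbi]) (use badp m1 in \<open>auto intro!: exI[of _ 0]\<close>)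
  have "P.prob (\<Union>i. bad (i + m1)) \<le> (\<Sum>i. P.prob (bad (i + m1)))"
    by (rule P.finite_measure_subadditive_countably[OF badsi smi])
  also have "\<dots> \<le> (\<Sum>i. bnd (i + m1))"
    by (rule suminf_le[OF _ smi sbi]) (use badp m1 in auto)
  also have "\<dots> < \<delta>" using N[OF m1(2)] bnd0 by (simp add: suminf_nonneg[OF sbi])
  finally have Ub: "P.prob (\<Union>i. bad (i + m1)) < \<delta>" .
  have "P.prob E = 1 - P.prob (\<Union>i. bad (i + m1))"
    unfolding E_def using badsi by (intro P.prob_compl) auto
  then have PE: "1 - \<delta> \<le> P.prob E" using Ub by simp
  have good: "(\<forall>k<m. \<bar>A m k \<omega>\<bar> \<le> real m powr kap \<and> (\<forall>j. \<bar>W m k \<omega> $ j\<bar> \<le> real m powr kap))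
      \<and> real m / 8 \<le> (\<Sum>k<m. min ((A m k \<omega>)^2) 1) \<and> 0 < norm (W m 0 \<omega>)" if \<omega>: "\<omega> \<in> E" and m: "m \<ge> m1" for \<omega> m
  proof -
    have sp: "\<omega> \<in> space M" using \<omega> unfolding E_def by auto
    have nb: "\<omega> \<notin> bad m"
    proof
      assume "\<omega> \<in> bad m"
      then have "\<omega> \<in> bad ((m - m1) + m1)" using m by simp
      then show False using \<omega> unfolding E_def by blast
    qed
    have g1: "\<bar>Fm m i \<omega>\<bar> \<le> real m powr kap" if "i \<in> I m" for i
      using nb that sp unfolding bad_def U1_def by (auto simp: not_less)
    have A1: "\<bar>A m k \<omega>\<bar> \<le> real m powr kap" if "k < m" for k
      using g1[of "Inl k"] that by (auto simp: I_def Fm_def)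
    have W1: "\<bar>W m k \<omega> $ j\<bar> \<le> real m powr kap" if "k < m" for k j
      using g1[of "Inr (k, j)"] that by (auto simp: I_def Fm_def)
    have "(\<Sum>i\<in>Inl ` {..<m}. min ((Fm m i \<omega>)^2) 1) = (\<Sum>k<m. min ((A m k \<omega>)^2) 1)"
      by (subst sum.reindex) (auto simp: Fm_def)
    moreover have "card (Inl ` {..<m} :: (nat + nat \<times> 'd) set) = m" by (simp add: card_image)
    ultimately have S: "real m / 8 \<le> (\<Sum>k<m. min ((A m k \<omega>)^2) 1)"
      using nb sp unfolding bad_def U2_def by (auto simp: not_less)
    have "W m 0 \<omega> $ (undefined :: 'd) \<noteq> 0" using nb sp unfolding bad_def U3_def by auto
    then have "W m 0 \<omega> \<noteq> 0" by auto
    then have "0 < norm (W m 0 \<omega>)" by simp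
    then show ?thesis using A1 W1 S by blast
  qed
  show ?thesis using Es PE good m1 by blast
qed

theorem theorem8:
  fixes M :: "'\<omega> measure"
    and \<delta> :: real
    and \<sigma> \<sigma>' \<sigma>'' :: "real \<Rightarrow> real" and CL :: real
    and n :: nat and x :: "nat \<Rightarrow> real^'d" and y :: "nat \<Rightarrow> real" and c :: real
    and \<nu> \<epsilon> :: "nat \<Rightarrow> real" and \<gamma>1 \<gamma>2 :: real
    and A :: "nat \<Rightarrow> nat \<Rightarrow> '\<omega> \<Rightarrow> real" and W :: "nat \<Rightarrow> nat \<Rightarrow> '\<omega> \<Rightarrow> real^'d"
    and a :: "'\<omega> \<Rightarrow> nat \<Rightarrow> real \<Rightarrow> nat \<Rightarrow> real"
    and w :: "'\<omega> \<Rightarrow> nat \<Rightarrow> real \<Rightarrow> nat \<Rightarrow> real^'d"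
  assumes delta: "0 < \<delta>" "\<delta> < 1"
    \<comment> \<open>Assumption (B)\<close>
    and sigma_d1: "\<And>u. (\<sigma> has_real_derivative \<sigma>' u) (at u)"
    and sigma_d2: "\<And>u. (\<sigma>' has_real_derivative \<sigma>'' u) (at u)"
    and sigma_C2: "continuous_on UNIV \<sigma>''"
    and CL_pos: "CL > 0"
    and sigma_b1: "\<And>u. \<bar>\<sigma>' u\<bar> \<le> CL"
    and sigma_b2: "\<And>u. \<bar>\<sigma>'' u\<bar> \<le> CL"
    and sigma0: "\<sigma> 0 = 0" and sigma'0: "\<sigma>' 0 = 1"
    \<comment> \<open>Assumption (D2)\<close>
    and n_pos: "n > 0"
    and c_pos: "c > 0"
    and x_lb: "\<And>i. i < n \<Longrightarrow> norm (x i) \<ge> 1 / c"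
    and y_ub: "\<And>i. i < n \<Longrightarrow> \<bar>y i\<bar> \<le> c"
    and z_lb: "1 / c \<le> norm ((1 / real n) *\<^sub>R (\<Sum>i<n. y i *\<^sub>R x i))"
    and z_ub: "norm ((1 / real n) *\<^sub>R (\<Sum>i<n. y i *\<^sub>R x i)) \<le> c"
    \<comment> \<open>scales and scaling limits\<close>
    and nu_pos: "\<And>m. \<nu> m > 0" and eps_pos: "\<And>m. \<epsilon> m > 0"
    and lim1: "((\<lambda>m. - ln (\<nu> m) / ln (real m)) \<longlongrightarrow> \<gamma>1) sequentially"
    and lim2: "((\<lambda>m. - ln (\<epsilon> m) / ln (real m)) \<longlongrightarrow> \<gamma>2) sequentially"
    and gamma_gt: "\<gamma>1 + \<gamma>2 > 1"
    and gamma'_neg: "\<gamma>1 - \<gamma>2 < 0"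
    \<comment> \<open>random initialization: for each width m, all a_k(0), w_k(0)_j (k < m) are
        independent standard Gaussians on the probability space M\<close>
    and M_prob: "prob_space M"
    and init_indep: "\<And>m. prob_space.indep_vars M (\<lambda>_. borel)
        (\<lambda>i. case i of Inl k \<Rightarrow> A m k | Inr (k, j) \<Rightarrow> (\<lambda>\<omega>. W m k \<omega> $ j))
        (Inl ` {..<m} \<union> Inr ` ({..<m} \<times> UNIV))"
    and init_a: "\<And>m k. k < m \<Longrightarrow>
        distributed M lborel (A m k) (\<lambda>u. ennreal (std_normal_density u))"
    and init_w: "\<And>m k j. k < m \<Longrightarrow>
        distributed M lborel (\<lambda>\<omega>. W m k \<omega> $ j) (\<lambda>u. ennreal (std_normal_density u))"
    \<comment> \<open>gradient-flow trajectories started at the initialization\<close>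
    and a_init: "\<And>\<omega> m k. \<omega> \<in> space M \<Longrightarrow> k < m \<Longrightarrow> a \<omega> m 0 k = A m k \<omega>"
    and w_init: "\<And>\<omega> m k. \<omega> \<in> space M \<Longrightarrow> k < m \<Longrightarrow> w \<omega> m 0 k = W m k \<omega>"
    and a_ode: "\<And>\<omega> m k t. \<omega> \<in> space M \<Longrightarrow> k < m \<Longrightarrow> 0 \<le> t \<Longrightarrow>
        ((\<lambda>s. a \<omega> m s k) has_real_derivative
          (- (\<epsilon> m / \<nu> m) * (1 / real n) *
             (\<Sum>i<n. (net_out m (\<nu> m) (\<epsilon> m) \<sigma> (a \<omega> m t) (w \<omega> m t) (x i) - y i)
                     * (\<sigma> (\<epsilon> m * (w \<omega> m t k \<bullet> x i)) / \<epsilon> m))))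
        (at t within {0..})"
    and w_ode: "\<And>\<omega> m k t. \<omega> \<in> space M \<Longrightarrow> k < m \<Longrightarrow> 0 \<le> t \<Longrightarrow>
        ((\<lambda>s. w \<omega> m s k) has_vector_derivative
          (- (\<nu> m / \<epsilon> m) * (1 / real n)) *\<^sub>R
             (\<Sum>i<n. ((net_out m (\<nu> m) (\<epsilon> m) \<sigma> (a \<omega> m t) (w \<omega> m t) (x i) - y i)
                     * a \<omega> m t k * \<sigma>' (\<epsilon> m * (w \<omega> m t k \<bullet> x i))) *\<^sub>R x i))
        (at t within {0..})"
  shows "\<exists>E \<in> sets M. measure M E \<ge> 1 - \<delta> \<and>
    (\<forall>\<omega> \<in> E.
      let zhat = (1 / norm ((1 / real n) *\<^sub>R (\<Sum>i<n. y i *\<^sub>R x i))) *\<^sub>R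
                   ((1 / real n) *\<^sub>R (\<Sum>i<n. y i *\<^sub>R x i));
          T = (\<lambda>m. T_eff m (\<nu> m) (\<epsilon> m) (\<gamma>1 - \<gamma>2) (beta_bar (\<gamma>1 + \<gamma>2) (\<gamma>1 - \<gamma>2))
                        (a \<omega> m) (w \<omega> m))
      in ((\<lambda>m. SUP t \<in> {t. 0 \<le> t \<and> ereal t \<le> T m}.
              ereal (theta_w_norm m (\<lambda>k. w \<omega> m t k - w \<omega> m 0 k) / theta_w_norm m (w \<omega> m 0)))
            \<longlongrightarrow> \<infinity>) sequentially
       \<and> ((\<lambda>m. SUP t \<in> {t. 0 \<le> t \<and> ereal t \<le> T m}.
              ereal (theta_wz_norm m zhat (w \<omega> m t) / theta_w_norm m (w \<omega> m t)))
            \<longlongrightarrow> ereal 1) sequentially)"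
proof -
  interpret P: prob_space M by (rule M_prob)
  define zz where "zz = (1 / real n) *\<^sub>R (\<Sum>i<n. y i *\<^sub>R x i)"
  have zn: "0 < norm zz" using z_lb c_pos unfolding zz_def
    by (smt (verit) divide_pos_pos)
  define Xs where "Xs = (\<Sum>i<n. norm (x i))"
  define K0 where "K0 = sqrt (real n) * (1 + c) * CL * Xs"
  define Dd where "Dd = real CARD('d) + 1"
  define tau where "tau = - (\<gamma>1 - \<gamma>2) / beta_bar (\<gamma>1 + \<gamma>2) (\<gamma>1 - \<gamma>2)"
  define kap where "kap = min (min (\<gamma>1 + \<gamma>2 - 1 - tau) (\<gamma>2 - tau)) (\<gamma>2 - \<gamma>1) / 16"
  define eta where "eta = 2 * kap"
  define Q where "Q = (\<lambda>m::nat. Dd * real m powr kap)"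
  define lamb where "lamb = (\<lambda>m::nat. real m powr eta)"
  define rr where "rr = (\<lambda>m. \<nu> m / \<epsilon> m)"
  define t where "t = (\<lambda>m. lamb m / rr m)"
  define Wb where "Wb = (\<lambda>m. Q m * (1 + 4 * K0 * lamb m))"
  define F where "F = (\<lambda>m. real m * \<nu> m * (4 * Q m) * CL * (\<epsilon> m * Wb m) * Xs)"
  define Dn where "Dn = (\<lambda>m. Xs * (c * (CL * (t m * K0 * 4 * Q m) + Q m * (CL * (\<epsilon> m * Wb m) * Xs)) + F m * (4 * Q m) * CL))"
  have CL0: "0 \<le> CL" using CL_pos by simp
  have c0: "0 \<le> c" using c_pos by simp
  have Xs0: "0 \<le> Xs" unfolding Xs_def by (simp add: sum_nonneg)
  have K00: "0 \<le> K0" unfolding K0_def using c0 CL0 Xs0 by simp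
  have Dd1: "1 \<le> Dd" unfolding Dd_def by simp
  note AS = asym[where nu=\<nu> and eps=\<epsilon> and ?g1.0=\<gamma>1 and ?g2.0=\<gamma>2 and Dd=Dd and ?K0.0=K0 and Xs=Xs and CL=CL and c=c
        and zn="norm zz" and kap=kap and eta=eta and tau=tau and Q=Q and lamb=lamb and rr=rr and t=t and Wb=Wb
        and F=F and Dn=Dn, OF nu_pos eps_pos lim1 lim2 gamma_gt gamma'_neg Dd1 K00 Xs0 CL0 c0 zn tau_def kap_def eta_def Q_def lamb_def
           rr_def t_def Wb_def F_def Dn_def]
  have "\<exists>E \<in> sets M. measure M E \<ge> 1 - \<delta> \<and> (\<exists>m1 \<ge> 1. \<forall>\<omega>\<in>E. \<forall>m\<ge>m1.
      (\<forall>k<m. \<bar>A m k \<omega>\<bar> \<le> real m powr kap \<and> (\<forall>j. \<bar>W m k \<omega> $ j\<bar> \<le> real m powr kap))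
      \<and> real m / 8 \<le> (\<Sum>k<m. min ((A m k \<omega>)^2) 1) \<and> 0 < norm (W m 0 \<omega>))"
    by (rule prob_part[where kap=kap and \<delta>=\<delta>]) (use M_prob init_indep init_a init_w AS(1) delta in auto)
  then obtain E m1 where Es: "E \<in> sets M" and PE: "measure M E \<ge> 1 - \<delta>" and m1: "m1 \<ge> 1"
    and good: "\<And>\<omega> m. \<omega> \<in> E \<Longrightarrow> m \<ge> m1 \<Longrightarrow>
      (\<forall>k<m. \<bar>A m k \<omega>\<bar> \<le> real m powr kap \<and> (\<forall>j. \<bar>W m k \<omega> $ j\<bar> \<le> real m powr kap))
      \<and> real m / 8 \<le> (\<Sum>k<m. min ((A m k \<omega>)^2) 1) \<and> 0 < norm (W m 0 \<omega>)"
    by blast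
  have ESp: "E \<subseteq> space M" using Es by (rule sets.sets_into_space)
  have zh1: "norm ((1 / norm zz) *\<^sub>R zz) = 1" using zn by simp
  have main: "let zhat = (1 / norm ((1 / real n) *\<^sub>R (\<Sum>i<n. y i *\<^sub>R x i))) *\<^sub>R
                   ((1 / real n) *\<^sub>R (\<Sum>i<n. y i *\<^sub>R x i));
          T = (\<lambda>m. T_eff m (\<nu> m) (\<epsilon> m) (\<gamma>1 - \<gamma>2) (beta_bar (\<gamma>1 + \<gamma>2) (\<gamma>1 - \<gamma>2))
                        (a \<omega> m) (w \<omega> m))
      in ((\<lambda>m. SUP t \<in> {t. 0 \<le> t \<and> ereal t \<le> T m}.
              ereal (theta_w_norm m (\<lambda>k. w \<omega> m t k - w \<omega> m 0 k) / theta_w_norm m (w \<omega> m 0)))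
            \<longlongrightarrow> \<infinity>) sequentially
       \<and> ((\<lambda>m. SUP t \<in> {t. 0 \<le> t \<and> ereal t \<le> T m}.
              ereal (theta_wz_norm m zhat (w \<omega> m t) / theta_w_norm m (w \<omega> m t)))
            \<longlongrightarrow> ereal 1) sequentially" if \<omega>E: "\<omega> \<in> E" for \<omega>
  proof -
    have sp: "\<omega> \<in> space M" using \<omega>E ESp by auto
    define T where "T = (\<lambda>m. T_eff m (\<nu> m) (\<epsilon> m) (\<gamma>1 - \<gamma>2) (beta_bar (\<gamma>1 + \<gamma>2) (\<gamma>1 - \<gamma>2)) (a \<omega> m) (w \<omega> m))"
    define g1 where "g1 m = lamb m * (norm zz / sqrt 8 - Dn m) / Q m" for m
    define g2 where "g2 m = (Q m + lamb m * Dn m) / (lamb m * norm zz / sqrt 8 - (Q m + lamb m * Dn m))" for m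
    have key: "eventually (\<lambda>m. \<exists>t. 0 \<le> t \<and> ereal t \<le> T m
        \<and> g1 m \<le> theta_w_norm m (\<lambda>k. w \<omega> m t k - w \<omega> m 0 k) / theta_w_norm m (w \<omega> m 0)
        \<and> 1 - g2 m \<le> theta_wz_norm m ((1 / norm zz) *\<^sub>R zz) (w \<omega> m t) / theta_w_norm m (w \<omega> m t)) sequentially"
      using AS(3) eventually_ge_at_top[of m1]
    proof eventually_elim
      case (elim m)
      have m0: "m > 0" using elim m1 by simp
      interpret TR: traj m n "\<nu> m" "\<epsilon> m" CL \<sigma> \<sigma>' \<sigma>'' x y "a \<omega> m" "w \<omega> m"
        by unfold_locales (use sigma_d1 sigma_d2 sigma_b1 sigma_b2 sigma0 sigma'0 n_pos nu_pos eps_pos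
             a_ode[OF sp] w_ode[OF sp] in auto)
      have zzeq: "TR.zz = zz" unfolding TR.zz_def zz_def ..
      have Xseq: "TR.Xs = Xs" unfolding TR.Xs_def Xs_def ..
      note gm = good[OF \<omega>E elim(2)]
      have mk: "real m powr kap \<le> Q m" unfolding Q_def Dd_def by (simp add: distrib_right)
      have Qb: "\<bar>a \<omega> m 0 k\<bar> \<le> Q m \<and> norm (w \<omega> m 0 k) \<le> Q m" if k: "k < m" for k
      proof
        show "\<bar>a \<omega> m 0 k\<bar> \<le> Q m" using gm k a_init[OF sp k] mk by auto
        have "norm (w \<omega> m 0 k) \<le> (\<Sum>j\<in>UNIV. \<bar>W m k \<omega> $ j\<bar>)" using w_init[OF sp k] norm_le_l1_cart by simp
        also have "\<dots> \<le> (\<Sum>j\<in>(UNIV::'d set). real m powr kap)" using gm k by (intro sum_mono) auto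
        also have "\<dots> = real CARD('d) * real m powr kap" by simp
        also have "\<dots> \<le> Q m" unfolding Q_def Dd_def by (simp add: distrib_right)
        finally show "norm (w \<omega> m 0 k) \<le> Q m" .
      qed
      have Sa: "real m / 8 \<le> (\<Sum>k<m. (a \<omega> m 0 k)^2)"
      proof -
        have "(\<Sum>k<m. min ((A m k \<omega>)^2) 1) \<le> (\<Sum>k<m. (a \<omega> m 0 k)^2)"
          using a_init[OF sp] by (intro sum_mono) auto
        then show ?thesis using gm by linarith
      qed
      have Sw: "0 < theta_w_norm m (w \<omega> m 0)"
      proof -
        have "norm (w \<omega> m 0 0) \<le> theta_w_norm m (w \<omega> m 0)" unfolding tw_L2 using m0 by (intro member_le_L2_set) auto
        moreover have "0 < norm (w \<omega> m 0 0)" using gm w_init[OF sp m0] by simp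
        ultimately show ?thesis by linarith
      qed
      have ex: "\<exists>t. 0 \<le> t \<and> ereal t \<le> T_eff m (\<nu> m) (\<epsilon> m) (\<gamma>1 - \<gamma>2) (beta_bar (\<gamma>1 + \<gamma>2) (\<gamma>1 - \<gamma>2)) (a \<omega> m) (w \<omega> m)
         \<and> lamb m * (norm TR.zz / sqrt 8 - Dn m) / Q m \<le> theta_w_norm m (\<lambda>k. w \<omega> m t k - w \<omega> m 0 k) / theta_w_norm m (w \<omega> m 0)
         \<and> 1 - (Q m + lamb m * Dn m) / (lamb m * norm TR.zz / sqrt 8 - (Q m + lamb m * Dn m))
             \<le> theta_wz_norm m ((1 / norm TR.zz) *\<^sub>R TR.zz) (w \<omega> m t) / theta_w_norm m (w \<omega> m t)"
      proof (rule TR.per_m[where Q="Q m" and lamb="lamb m" and ?K0.0=K0 and c=c and gamma'="\<gamma>1 - \<gamma>2"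
            and beta="beta_bar (\<gamma>1 + \<gamma>2) (\<gamma>1 - \<gamma>2)" and Dn="Dn m"])
        show "0 < m" by (rule m0)
        show "\<And>i. i < n \<Longrightarrow> \<bar>y i\<bar> \<le> c" by (rule y_ub)
        show "0 < norm TR.zz" using zn zzeq by simp
        show "\<And>k. k < m \<Longrightarrow> \<bar>a \<omega> m 0 k\<bar> \<le> Q m \<and> norm (w \<omega> m 0 k) \<le> Q m" by (rule Qb)
        show "real m / 8 \<le> (\<Sum>k<m. (a \<omega> m 0 k)^2)" by (rule Sa)
        show "0 < theta_w_norm m (w \<omega> m 0)" by (rule Sw)
        show "1 \<le> \<nu> m / \<epsilon> m" using elim unfolding rr_def by simp
        show "2 * K0 * (lamb m / (\<nu> m / \<epsilon> m)) \<le> 1" using elim unfolding rr_def by simp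
        show "real m * \<nu> m * \<epsilon> m * (Q m * (5 + 4 * K0 * lamb m))^3 + \<epsilon> m * (Q m * (5 + 4 * K0 * lamb m))^2
            \<le> real m powr (- (- (\<gamma>1 - \<gamma>2) / beta_bar (\<gamma>1 + \<gamma>2) (\<gamma>1 - \<gamma>2)))"
          using elim unfolding tau_def by simp
        show "real m * \<nu> m * \<epsilon> m * CL * TR.Xs * (Q m)^2 \<le> 1" using elim Xseq by simp
        show "2 * (Q m + lamb m * Dn m) < lamb m * norm TR.zz / sqrt 8" using elim zzeq by simp
        show "0 < lamb m" using elim by simp
        show "K0 = sqrt (real n) * (1 + c) * CL * TR.Xs" unfolding K0_def Xseq ..
        show "Dn m = TR.Xs * (c * (CL * ((lamb m / (\<nu> m / \<epsilon> m)) * K0 * 4 * Q m) + Q m * (CL * (\<epsilon> m * (Q m * (1 + 4 * K0 * lamb m))) * TR.Xs))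
                 + (real m * \<nu> m * (4 * Q m) * CL * (\<epsilon> m * (Q m * (1 + 4 * K0 * lamb m))) * TR.Xs) * (4 * Q m) * CL)"
          unfolding Dn_def F_def Wb_def t_def rr_def Xseq ..
      qed
      then show ?case unfolding zzeq T_def g1_def g2_def .
    qed
    have C1: "((\<lambda>m. SUP t \<in> {t. 0 \<le> t \<and> ereal t \<le> T m}.
              ereal (theta_w_norm m (\<lambda>k. w \<omega> m t k - w \<omega> m 0 k) / theta_w_norm m (w \<omega> m 0))) \<longlongrightarrow> \<infinity>) sequentially"
      unfolding tendsto_PInfty
    proof
      fix r :: real
      show "eventually (\<lambda>m. ereal r < (SUP t \<in> {t. 0 \<le> t \<and> ereal t \<le> T m}.
              ereal (theta_w_norm m (\<lambda>k. w \<omega> m t k - w \<omega> m 0 k) / theta_w_norm m (w \<omega> m 0)))) sequentially"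
        using key AS(4)[of r]
      proof eventually_elim
        case (elim m)
        then obtain t where t: "0 \<le> t" "ereal t \<le> T m"
          "g1 m \<le> theta_w_norm m (\<lambda>k. w \<omega> m t k - w \<omega> m 0 k) / theta_w_norm m (w \<omega> m 0)" by blast
        have "ereal r < ereal (g1 m)" using elim(2) unfolding g1_def by simp
        also have "\<dots> \<le> ereal (theta_w_norm m (\<lambda>k. w \<omega> m t k - w \<omega> m 0 k) / theta_w_norm m (w \<omega> m 0))"
          using t(3) by simp
        also have "\<dots> \<le> (SUP t \<in> {t. 0 \<le> t \<and> ereal t \<le> T m}.
              ereal (theta_w_norm m (\<lambda>k. w \<omega> m t k - w \<omega> m 0 k) / theta_w_norm m (w \<omega> m 0)))"
          using t(1,2) by (intro SUP_upper) auto
        finally show ?case .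
      qed
    qed
    have C2: "((\<lambda>m. SUP t \<in> {t. 0 \<le> t \<and> ereal t \<le> T m}.
              ereal (theta_wz_norm m ((1 / norm zz) *\<^sub>R zz) (w \<omega> m t) / theta_w_norm m (w \<omega> m t))) \<longlongrightarrow> ereal 1) sequentially"
    proof (rule tendsto_sandwich[where f="\<lambda>m. ereal (1 - g2 m)" and h="\<lambda>m. ereal 1"])
      show "eventually (\<lambda>m. ereal (1 - g2 m) \<le> (SUP t \<in> {t. 0 \<le> t \<and> ereal t \<le> T m}.
              ereal (theta_wz_norm m ((1 / norm zz) *\<^sub>R zz) (w \<omega> m t) / theta_w_norm m (w \<omega> m t)))) sequentially"
        using key
      proof eventually_elim
        case (elim m)
        then obtain t where t: "0 \<le> t" "ereal t \<le> T m"
          "1 - g2 m \<le> theta_wz_norm m ((1 / norm zz) *\<^sub>R zz) (w \<omega> m t) / theta_w_norm m (w \<omega> m t)" by blast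
        have "ereal (1 - g2 m) \<le> ereal (theta_wz_norm m ((1 / norm zz) *\<^sub>R zz) (w \<omega> m t) / theta_w_norm m (w \<omega> m t))"
          using t(3) by simp
        also have "\<dots> \<le> (SUP t \<in> {t. 0 \<le> t \<and> ereal t \<le> T m}.
              ereal (theta_wz_norm m ((1 / norm zz) *\<^sub>R zz) (w \<omega> m t) / theta_w_norm m (w \<omega> m t)))"
          using t(1,2) by (intro SUP_upper) auto
        finally show ?case .
      qed
      show "eventually (\<lambda>m. (SUP t \<in> {t. 0 \<le> t \<and> ereal t \<le> T m}.
              ereal (theta_wz_norm m ((1 / norm zz) *\<^sub>R zz) (w \<omega> m t) / theta_w_norm m (w \<omega> m t))) \<le> ereal 1) sequentially"
        by (intro always_eventually allI SUP_least) (simp add: ratio_le1[OF zh1])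
      show "((\<lambda>m. ereal (1 - g2 m)) \<longlongrightarrow> ereal 1) sequentially"
        using AS(5) unfolding g2_def lim_ereal by (auto intro: tendsto_eq_intros)
      show "((\<lambda>m. ereal 1) \<longlongrightarrow> ereal 1) sequentially" by simp
    qed
    show ?thesis using C1 C2 unfolding Let_def T_def zz_def by simp
  qed
  show ?thesis using Es PE main by blast
qed

end
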